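(* Let $\mathcal M\subset \mathcal M_n(\mathbb R)$ be a compact convex set of irreducible Metzler matrices, and let $\lambda(\mathcal M)$ be the real number defined below. Let $v_0:K\to\mathbb R_+$ be a continuous function, homogeneous of degree 1, positive on $K_0$, and define $v(t,x)=\sup_{M\in L^\infty(0,t)} v_0(x_M(t))$. Then for every $x\in K_0$, \[ \lim_{t\to+\infty}\frac1t\log v(t,x)=\lambda(\mathcal M), \] and the convergence is locally uniform on $K_0$.
   Context: A real $n\times n$ matrix $m$ is Metzler if $m_{ij}\ge 0$ for all $i\neq j$; it is irreducible if for every partition $\{1,\dots,n\}=I\sqcup J$ into nonempty sets there exist $i\in I$, $j\in J$ with $m_{ij}>0$. $K$ is the nonnegative orthant of $\mathbb R^n$, $K_0=K\setminus\{0\}$. For $t>0$, $L^\infty(0,t)$ denotes the set of measurable controls $M:[0,t]\to\mathcal M$, and $x_M$ is the solution of $\dot x_M(s)=M(s)x_M(s)$, $x_M(0)=x$. $\lambda(\mathcal M)$ is the (unique) real number for which there exists a function $\overline v:K\to\mathbb R_+$, homogeneous of degree 1, positive on $K_0$ and globally Lipschitz, such that $e^{\lambda(\mathcal M)t}\overline v(x)=\sup_{M\in L^\infty(0,t)}\overline v(x_M(t))$ for all $t\ge0$, $x\in K$. *)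

theory Defs
  imports "HOL-Analysis.Analysis"
begin

text \<open>Dimension n is the cardinality of the finite index type 'n.
  Vectors are real^'n, matrices real^'n^'n (row i, column j: m$i$j).\<close>

definition orthant :: "(real^'n) set" where
  "orthant = {x. \<forall>i. 0 \<le> x $ i}"

definition orthant0 :: "(real^'n) set" where
  "orthant0 = orthant - {0}"

definition metzler :: "real^'n^'n \<Rightarrow> bool" where
  "metzler m \<longleftrightarrow> (\<forall>i j. i \<noteq> j \<longrightarrow> 0 \<le> m $ i $ j)"

definition irreducible_mat :: "real^'n^'n \<Rightarrow> bool" where
  "irreducible_mat m \<longleftrightarrow>
     (\<forall>I::'n set. I \<noteq> {} \<and> I \<noteq> UNIV \<longrightarrow> (\<exists>i\<in>I. \<exists>j\<in>-I. m $ i $ j > 0))"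

text \<open>Controls in L^\<infinity>(0,t) with values in \<M>: measurable maps [0,t] \<rightarrow> \<M>
  (essential boundedness is automatic since \<M> is compact).\<close>
definition admissible_control :: "(real^'n^'n) set \<Rightarrow> real \<Rightarrow> (real \<Rightarrow> real^'n^'n) \<Rightarrow> bool" where
  "admissible_control Ms t M \<longleftrightarrow>
     M \<in> borel_measurable (lebesgue_on {0..t}) \<and> (\<forall>s\<in>{0..t}. M s \<in> Ms)"

text \<open>(Caratheodory) solution of x' = M(s) x, x(0) = x on [0,t], in integral form.\<close>
definition is_trajectory :: "(real \<Rightarrow> real^'n^'n) \<Rightarrow> real^'n \<Rightarrow> real \<Rightarrow> (real \<Rightarrow> real^'n) \<Rightarrow> bool" where
  "is_trajectory M x t y \<longleftrightarrow> continuous_on {0..t} y \<and>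
     (\<forall>s\<in>{0..t}. (\<lambda>r. M r *v y r) integrable_on {0..s} \<and>
                  y s = x + integral {0..s} (\<lambda>r. M r *v y r))"

definition reachable :: "(real^'n^'n) set \<Rightarrow> real \<Rightarrow> real^'n \<Rightarrow> (real^'n) set" where
  "reachable Ms t x = {y t | M y. admissible_control Ms t M \<and> is_trajectory M x t y}"

definition value_fun :: "(real^'n \<Rightarrow> real) \<Rightarrow> (real^'n^'n) set \<Rightarrow> real \<Rightarrow> real^'n \<Rightarrow> real" where
  "value_fun w Ms t x = Sup (w ` reachable Ms t x)"

definition homogeneous1 :: "(real^'n \<Rightarrow> real) \<Rightarrow> bool" where
  "homogeneous1 w \<longleftrightarrow> (\<forall>x\<in>orthant. \<forall>c::real. c > 0 \<longrightarrow> w (c *\<^sub>R x) = c * w x)"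

definition pos_on_cone :: "(real^'n \<Rightarrow> real) \<Rightarrow> bool" where
  "pos_on_cone w \<longleftrightarrow> (\<forall>x\<in>orthant. 0 \<le> w x) \<and> (\<forall>x\<in>orthant0. 0 < w x)"

definition lambda_M :: "(real^'n^'n) set \<Rightarrow> real" where
  "lambda_M Ms = (THE l. \<exists>w. homogeneous1 w \<and> pos_on_cone w \<and>
       (\<exists>L. L-lipschitz_on orthant w) \<and>
       (\<forall>t\<ge>0. \<forall>x\<in>orthant. exp (l * t) * w x = value_fun w Ms t x))"

end

theory Submission
  imports Defs
begin

lemma gronwall:
  fixes phi :: "real \<Rightarrow> real"
  assumes cont: "continuous_on {0..t} phi" and K: "K \<ge> 0"
    and le: "\<And>s. s \<in> {0..t} \<Longrightarrow> phi s \<le> a + K * integral {0..s} phi"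
    and s: "s \<in> {0..t}"
  shows "phi s \<le> a * exp (K * s)"
proof -
  define F where "F u = integral {0..u} phi" for u
  define G where "G u = exp (- K * u) * (a + K * F u)" for u
  have Fd: "(F has_real_derivative phi u) (at u within {0..t})" if "u \<in> {0..t}" for u
    unfolding F_def by (rule integral_has_real_derivative[OF cont that])
  have Fc: "continuous_on {0..t} F"
    unfolding F_def by (rule indefinite_integral_continuous_1[OF integrable_continuous_real[OF cont]])
  have Gc: "continuous_on {0..s} G"
    unfolding G_def using s by (intro continuous_intros continuous_on_subset[OF Fc]) auto
  have "G s \<le> G 0"
  proof (rule DERIV_nonpos_imp_decreasing_open[of 0 s G])
    show "0 \<le> s" using s by auto
    show "continuous_on {0..s} G" by (rule Gc)
    fix x assume x: "0 < x" "x < s"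
    have "(F has_real_derivative phi x) (at x)"
      using Fd[of x] x s by (simp add: at_within_Icc_at)
    then have "(G has_real_derivative (exp (- K * x) * (- K) * (a + K * F x) + exp (- K * x) * (K * phi x))) (at x)"
      unfolding G_def by (auto intro!: derivative_eq_intros)
    moreover have "exp (- K * x) * (- K) * (a + K * F x) + exp (- K * x) * (K * phi x) \<le> 0"
    proof -
      have "phi x \<le> a + K * F x" using le[of x] x s by (auto simp: F_def)
      then have "K * phi x \<le> K * (a + K * F x)" using K by (rule mult_left_mono)
      moreover have "exp (- K * x) * (- K) * (a + K * F x) + exp (- K * x) * (K * phi x)
          = exp (- K * x) * (K * phi x - K * (a + K * F x))" by (simp add: algebra_simps)
      ultimately show ?thesis by (simp add: mult_nonneg_nonpos)
    qed
    ultimately show "\<exists>y. (G has_real_derivative y) (at x) \<and> y \<le> 0" by blast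
  qed
  then have "exp (- K * s) * (a + K * F s) \<le> a" by (simp add: G_def F_def)
  then have "a + K * F s \<le> a * exp (K * s)"
    by (simp add: exp_minus field_simps)
  then show ?thesis using le[OF s] by (simp add: F_def)
qed


lemma bilinear_mv: "bilinear (\<lambda>(A::real^'n^'m) (x::real^'n). A *v x)"
  unfolding bilinear_def
proof (intro conjI allI)
  show "linear ((*v) A)" for A :: "real^'n^'m" by simp
  show "linear (\<lambda>A::real^'n^'m. A *v y)" for y
    by (rule linearI) (simp add: matrix_vector_mult_add_rdistrib, simp add: scaleR_matrix_vector_assoc)
qed

lemma Icc_leb[simp]: "{a..b::real} \<in> sets lebesgue"
  by (simp add: borel_closed)

lemma meas_restrict:
  assumes "M \<in> borel_measurable (lebesgue_on {0..t})" "s \<le> t"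
  shows "(M::real \<Rightarrow> real^'n^'n) \<in> borel_measurable (lebesgue_on {0..s})"
proof -
  have "{x \<in> {0..s}. M x \<in> T} \<in> sets lebesgue" if "T \<in> sets borel" for T
  proof -
    have "{x \<in> {0..s}. M x \<in> T} = {x \<in> {0..t}. M x \<in> T} \<inter> {0..s}" using assms by auto
    moreover have "{x \<in> {0..t}. M x \<in> T} \<in> sets lebesgue"
      using assms(1) that borel_measurable_lebesgue_on_preimage_borel[of "{0..t}" M] Icc_leb by blast
    ultimately show ?thesis by auto
  qed
  then show ?thesis using borel_measurable_lebesgue_on_preimage_borel[of "{0..s}" M] Icc_leb by blast
qed

locale ctrl =
  fixes Ms :: "(real^'n^'n) set" and R :: real
  assumes R: "R \<ge> 0"
    and bnd: "\<And>m x. m \<in> Ms \<Longrightarrow> norm (m *v x) \<le> R * norm x"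
    and comp: "\<And>m i j. m \<in> Ms \<Longrightarrow> \<bar>m$i$j\<bar> \<le> R"
    and bdd: "bounded Ms"
    and metz: "\<And>m. m \<in> Ms \<Longrightarrow> metzler m"
begin

lemma adm_restrict: "admissible_control Ms t M \<Longrightarrow> s \<le> t \<Longrightarrow> admissible_control Ms s M"
  unfolding admissible_control_def
proof (elim conjE, intro conjI)
  assume "M \<in> borel_measurable (lebesgue_on {0..t})" "s \<le> t"
  then show "M \<in> borel_measurable (lebesgue_on {0..s})" by (rule meas_restrict)
qed auto

lemma integrable_mv:
  assumes "admissible_control Ms t M" "continuous_on {0..t} y" "s \<le> t"
  shows "(\<lambda>r. M r *v y r) absolutely_integrable_on {0..s}"
proof -
  have M: "M \<in> borel_measurable (lebesgue_on {0..s})"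
    using adm_restrict[OF assms(1,3)] unfolding admissible_control_def by (rule conjunct1)
  have "bounded (M ` {0..s})"
  proof (rule bounded_subset[OF bdd])
    show "M ` {0..s} \<subseteq> Ms" using assms(1,3) unfolding admissible_control_def by auto
  qed
  moreover have "y absolutely_integrable_on {0..s}"
    using assms(2,3) by (intro absolutely_integrable_continuous_real continuous_on_subset[OF assms(2)]) auto
  ultimately show ?thesis
    using absolutely_integrable_bounded_measurable_product[OF bilinear_mv M Icc_leb, of y] by blast
qed

lemma integrable_mv':
  assumes "admissible_control Ms t M" "continuous_on {0..t} y" "s \<le> t"
  shows "(\<lambda>r. M r *v y r) integrable_on {0..s}"
  using integrable_mv[OF assms] set_lebesgue_integral_eq_integral(1) by blast

end

context ctrl begin

lemma traj_cont: "is_trajectory M x t y \<Longrightarrow> continuous_on {0..t} y"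
  unfolding is_trajectory_def by blast

lemma traj_eq: "is_trajectory M x t y \<Longrightarrow> s \<in> {0..t} \<Longrightarrow> y s = x + integral {0..s} (\<lambda>r. M r *v y r)"
  unfolding is_trajectory_def by blast

lemma traj_int: "is_trajectory M x t y \<Longrightarrow> s \<in> {0..t} \<Longrightarrow> (\<lambda>r. M r *v y r) integrable_on {0..s}"
  unfolding is_trajectory_def by blast

lemma traj_0: "is_trajectory M x t y \<Longrightarrow> 0 \<le> t \<Longrightarrow> y 0 = x"
  using traj_eq[of M x t y 0] by simp

lemma traj_restrict:
  assumes "is_trajectory M x t y" "s \<le> t" shows "is_trajectory M x s y"
  unfolding is_trajectory_def
proof (intro conjI ballI)
  show "continuous_on {0..s} y"
    using traj_cont[OF assms(1)] assms(2) continuous_on_subset by fastforce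
  fix u assume u: "u \<in> {0..s}"
  then have u': "u \<in> {0..t}" using assms(2) by auto
  show "(\<lambda>r. M r *v y r) integrable_on {0..u}" by (rule traj_int[OF assms(1) u'])
  show "y u = x + integral {0..u} (\<lambda>r. M r *v y r)" by (rule traj_eq[OF assms(1) u'])
qed

lemma traj_add:
  assumes "is_trajectory M x t y" "is_trajectory M x' t y'"
  shows "is_trajectory M (x + x') t (\<lambda>s. y s + y' s)"
  unfolding is_trajectory_def
proof (intro conjI ballI)
  show "continuous_on {0..t} (\<lambda>s. y s + y' s)"
    using assms by (intro continuous_intros traj_cont)
  fix s assume s: "s \<in> {0..t}"
  have i1: "(\<lambda>r. M r *v y r) integrable_on {0..s}" and i2: "(\<lambda>r. M r *v y' r) integrable_on {0..s}"
    using assms s by (auto intro: traj_int)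
  show "(\<lambda>r. M r *v (y r + y' r)) integrable_on {0..s}"
    using integrable_add[OF i1 i2] by (simp add: matrix_vector_right_distrib)
  have "integral {0..s} (\<lambda>r. M r *v (y r + y' r)) = integral {0..s} (\<lambda>r. M r *v y r) + integral {0..s} (\<lambda>r. M r *v y' r)"
    using integral_add[OF i1 i2] by (simp add: matrix_vector_right_distrib)
  then show "y s + y' s = x + x' + integral {0..s} (\<lambda>r. M r *v (y r + y' r))"
    using traj_eq[OF assms(1) s] traj_eq[OF assms(2) s] by (simp add: add_ac)
qed

lemma traj_scale:
  assumes "is_trajectory M x t y"
  shows "is_trajectory M (c *\<^sub>R x) t (\<lambda>s. c *\<^sub>R y s)"
  unfolding is_trajectory_def
proof (intro conjI ballI)
  show "continuous_on {0..t} (\<lambda>s. c *\<^sub>R y s)"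
    using assms by (intro continuous_intros traj_cont)
  fix s assume s: "s \<in> {0..t}"
  have i1: "(\<lambda>r. M r *v y r) integrable_on {0..s}"
    using assms s by (auto intro: traj_int)
  show "(\<lambda>r. M r *v (c *\<^sub>R y r)) integrable_on {0..s}"
    using integrable_cmul[OF i1, of c] by (simp add: matrix_vector_mult_scaleR)
  have "integral {0..s} (\<lambda>r. M r *v (c *\<^sub>R y r)) = c *\<^sub>R integral {0..s} (\<lambda>r. M r *v y r)"
    by (simp add: matrix_vector_mult_scaleR)
  then show "c *\<^sub>R y s = c *\<^sub>R x + integral {0..s} (\<lambda>r. M r *v (c *\<^sub>R y r))"
    using traj_eq[OF assms s] by (simp add: scaleR_add_right)
qed

lemma traj_bound:
  assumes "admissible_control Ms t M" "is_trajectory M x t y" "s \<in> {0..t}"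
  shows "norm (y s) \<le> norm x * exp (R * s)"
proof (rule gronwall[where phi = "\<lambda>s. norm (y s)" and t = t])
  show "continuous_on {0..t} (\<lambda>s. norm (y s))"
    using traj_cont[OF assms(2)] by (intro continuous_intros)
  show "0 \<le> R" by (rule R)
  show "s \<in> {0..t}" by fact
  fix u assume u: "u \<in> {0..t}"
  have cy: "continuous_on {0..u} y"
    using traj_cont[OF assms(2)] u by (auto intro: continuous_on_subset)
  have "norm (y u) \<le> norm x + norm (integral {0..u} (\<lambda>r. M r *v y r))"
    using traj_eq[OF assms(2) u] by (simp add: norm_triangle_ineq)
  also have "norm (integral {0..u} (\<lambda>r. M r *v y r)) \<le> integral {0..u} (\<lambda>r. R * norm (y r))"
  proof (rule integral_norm_bound_integral)
    show "(\<lambda>r. M r *v y r) integrable_on {0..u}"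
      using assms(2) u by (auto intro: traj_int)
    show "(\<lambda>r. R * norm (y r)) integrable_on {0..u}"
      using cy by (intro integrable_continuous_real continuous_intros)
    fix r assume "r \<in> {0..u}"
    then have "M r \<in> Ms" using assms(1) u by (auto simp: admissible_control_def)
    then show "norm (M r *v y r) \<le> R * norm (y r)" by (rule bnd)
  qed
  also have "integral {0..u} (\<lambda>r. R * norm (y r)) = R * integral {0..u} (\<lambda>r. norm (y r))"
    by simp
  finally show "norm (y u) \<le> norm x + R * integral {0..u} (\<lambda>r. norm (y r))" by simp
qed

lemma traj_zero:
  assumes "admissible_control Ms t M" "is_trajectory M 0 t y" "s \<in> {0..t}"
  shows "y s = 0"
  using traj_bound[OF assms] by simp

lemma traj_unique:
  assumes "admissible_control Ms t M" "is_trajectory M x t y" "is_trajectory M x t y'" "s \<in> {0..t}"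
  shows "y s = y' s"
proof -
  have T: "is_trajectory M 0 t (\<lambda>s. y s - y' s)"
    using traj_add[OF assms(2) traj_scale[OF assms(3), of "-1"]] by simp
  from traj_zero[OF assms(1) T assms(4)] show ?thesis by simp
qed

end

context ctrl begin

lemma comp_int:
  fixes g :: "real \<Rightarrow> real^'n"
  shows "g integrable_on S \<Longrightarrow> (\<lambda>r. g r $ i) integrable_on S"
  using integrable_linear[OF _ bounded_linear_vec_nth, of g S i] by (simp add: o_def)

lemma last_zero:
  fixes f :: "real \<Rightarrow> real"
  assumes cf: "continuous_on {0..s} f" and f0: "f 0 \<ge> 0" and fs: "f s < 0" and s: "0 \<le> s"
  obtains tau where "tau \<in> {0..s}" "f tau = 0" "\<And>r. r \<in> {tau..s} \<Longrightarrow> f r \<le> 0"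
proof -
  define Z where "Z = {r \<in> {0..s}. f r = 0}"
  have "\<exists>r. 0 \<le> r \<and> r \<le> s \<and> (\<lambda>r. - f r) r = 0"
    using IVT'[of "\<lambda>r. - f r" 0 0 s] f0 fs s cf by (auto intro: continuous_intros)
  then have Zne: "Z \<noteq> {}" unfolding Z_def by auto
  have Zcl: "closed Z"
  proof -
    have "Z = {0..s} \<inter> f -` {0}" unfolding Z_def by auto
    then show ?thesis using continuous_closed_preimage[OF cf closed_atLeastAtMost closed_singleton]
      by (simp add: Z_def vimage_def Int_def)
  qed
  have Zbd: "bdd_above Z" unfolding Z_def by (rule bdd_aboveI[of _ s]) auto
  define tau where "tau = Sup Z"
  have tZ: "tau \<in> Z" unfolding tau_def by (rule closed_contains_Sup[OF Zne Zbd Zcl])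
  show ?thesis
  proof (rule that)
    show "tau \<in> {0..s}" "f tau = 0" using tZ unfolding Z_def by auto
    fix r assume r: "r \<in> {tau..s}"
    show "f r \<le> 0"
    proof (rule ccontr)
      assume "\<not> f r \<le> 0"
      then have fr: "f r > 0" by simp
      have "r \<in> {0..s}" using r tZ unfolding Z_def by auto
      have "continuous_on {r..s} f"
        using \<open>r \<in> {0..s}\<close> by (intro continuous_on_subset[OF cf]) auto
      then have "continuous_on {r..s} (\<lambda>r. - f r)" by (intro continuous_intros)
      then have "\<exists>z. r \<le> z \<and> z \<le> s \<and> (\<lambda>r. - f r) z = 0"
        using IVT'[of "\<lambda>r. - f r" r 0 s] fr fs r by auto
      then obtain z where z: "r \<le> z" "z \<le> s" "f z = 0" by auto
      then have "z \<in> Z" using \<open>r \<in> {0..s}\<close> unfolding Z_def by auto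
      then have "z \<le> tau" unfolding tau_def by (rule cSup_upper[OF _ Zbd])
      moreover have "r \<noteq> tau" using fr \<open>tau \<in> Z\<close> unfolding Z_def by auto
      ultimately show False using z r by auto
    qed
  qed
qed

lemma traj_pos:
  assumes adm: "admissible_control Ms t M" and tr: "is_trajectory M x t y"
    and x: "x \<in> orthant" and s: "s \<in> {0..t}"
  shows "y s \<in> orthant"
proof -
  define neg where "neg i r = max 0 (- (y r $ i))" for i r
  define u where "u r = (\<Sum>i\<in>UNIV. neg i r)" for r
  define N where "N = real CARD('n)"
  have N0: "N \<ge> 0" unfolding N_def by simp
  have yc: "continuous_on {0..t} y" by (rule traj_cont[OF tr])
  have uc: "continuous_on {0..t} u"
    unfolding u_def neg_def using yc by (intro continuous_intros)
  have neg0: "neg i r \<ge> 0" for i r unfolding neg_def by simp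
  have u0: "u r \<ge> 0" for r unfolding u_def using neg0 by (simp add: sum_nonneg)
  have negu: "neg i r \<le> u r" for i r
    unfolding u_def using neg0 by (intro member_le_sum) auto
  have uint: "u integrable_on {a..b}" if "0 \<le> a" "b \<le> t" for a b
    using uc that by (intro integrable_continuous_real continuous_on_subset[OF uc]) auto
  have key: "neg i s' \<le> (N * R) * integral {0..s'} u" if s': "s' \<in> {0..t}" for i s'
  proof (cases "y s' $ i \<ge> 0")
    case True
    then have "neg i s' = 0" unfolding neg_def by simp
    moreover have "0 \<le> integral {0..s'} u"
      using uint[of 0 s'] s' u0 by (intro integral_nonneg) auto
    ultimately show ?thesis using N0 R by simp
  next
    case False
    have cf: "continuous_on {0..s'} (\<lambda>r. y r $ i)"
      using s' by (intro continuous_intros continuous_on_subset[OF yc]) auto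
    have f0: "y 0 $ i \<ge> 0" using traj_0[OF tr] s' x unfolding orthant_def by auto
    obtain tau where tau: "tau \<in> {0..s'}" "y tau $ i = 0" "\<And>r. r \<in> {tau..s'} \<Longrightarrow> y r $ i \<le> 0"
      using last_zero[OF cf f0 _] False s' by (metis atLeastAtMost_iff not_le)
    have tau_t: "tau \<in> {0..t}" using tau s' by auto
    have gi: "(\<lambda>r. M r *v y r) integrable_on {0..s'}" by (rule traj_int[OF tr s'])
    have gi2: "(\<lambda>r. M r *v y r) integrable_on {tau..s'}"
      using gi tau by (intro integrable_subinterval_real[OF gi]) auto
    have comb: "integral {0..tau} (\<lambda>r. M r *v y r) + integral {tau..s'} (\<lambda>r. M r *v y r)
        = integral {0..s'} (\<lambda>r. M r *v y r)"
      using tau by (intro Henstock_Kurzweil_Integration.integral_combine[OF _ _ gi]) auto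
    have "y s' - y tau = integral {tau..s'} (\<lambda>r. M r *v y r)"
      using traj_eq[OF tr s'] traj_eq[OF tr tau_t] comb by (simp add: algebra_simps)
    then have "y s' $ i - y tau $ i = integral {tau..s'} (\<lambda>r. M r *v y r) $ i"
      by (metis vector_minus_component)
    then have ys: "y s' $ i = integral {tau..s'} (\<lambda>r. (M r *v y r) $ i)"
      using tau(2) integral_component_eq_cart[OF gi2, of i] by simp
    have lower: "(M r *v y r) $ i \<ge> - (N * R) * u r" if r: "r \<in> {tau..s'}" for r
    proof -
      have Mr: "M r \<in> Ms" using adm r tau s' unfolding admissible_control_def by auto
      have trm: "M r $ i $ j * y r $ j \<ge> - R * u r" for j
      proof (cases "j = i")
        case True
        have "\<bar>M r $ i $ j * y r $ j\<bar> \<le> R * \<bar>y r $ j\<bar>"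
          using comp[OF Mr, of i j] by (simp add: abs_mult mult_right_mono)
        moreover have "\<bar>y r $ j\<bar> = neg j r" using True tau(3)[OF r] unfolding neg_def by simp
        then have "R * \<bar>y r $ j\<bar> \<le> R * u r" using mult_left_mono[OF negu[of j r] R] by simp
        ultimately have "\<bar>M r $ i $ j * y r $ j\<bar> \<le> R * u r" by (rule order.trans)
        then show ?thesis by linarith
      next
        case False
        have m0: "M r $ i $ j \<ge> 0" using metz[OF Mr] False unfolding metzler_def by auto
        have "y r $ j \<ge> - u r" using negu[of j r] unfolding neg_def by linarith
        then have "M r $ i $ j * y r $ j \<ge> M r $ i $ j * (- u r)" using m0 by (rule mult_left_mono)
        moreover have "M r $ i $ j * u r \<le> R * u r"
          using comp[OF Mr, of i j] u0[of r] m0 by (intro mult_right_mono) auto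
        ultimately show ?thesis by linarith
      qed
      have "(M r *v y r) $ i = (\<Sum>j\<in>UNIV. M r $ i $ j * y r $ j)"
        by (simp add: matrix_vector_mult_def)
      also have "\<dots> \<ge> (\<Sum>j\<in>(UNIV::'n set). - R * u r)"
        by (rule sum_mono) (rule trm)
      finally show ?thesis by (simp add: N_def)
    qed
    have "integral {tau..s'} (\<lambda>r. - (N * R) * u r) \<le> integral {tau..s'} (\<lambda>r. (M r *v y r) $ i)"
    proof (rule integral_le[OF _ comp_int[OF gi2]])
      show "(\<lambda>r. - (N * R) * u r) integrable_on {tau..s'}"
        using uint[of tau s'] tau s' by (intro integrable_on_mult_right) auto
    qed (use lower in auto)
    then have A: "- (N * R) * integral {tau..s'} u \<le> y s' $ i" using ys by simp
    have B: "integral {tau..s'} u \<le> integral {0..s'} u"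
    proof -
      have "integral {0..tau} u + integral {tau..s'} u = integral {0..s'} u"
        using tau s' by (intro Henstock_Kurzweil_Integration.integral_combine uint) auto
      moreover have "0 \<le> integral {0..tau} u"
        using uint[of 0 tau] tau s' u0 by (intro integral_nonneg) auto
      ultimately show ?thesis by linarith
    qed
    have "N * R \<ge> 0" using N0 R by simp
    from mult_left_mono[OF B this] A have "- (N * R) * integral {0..s'} u \<le> y s' $ i"
      unfolding mult_minus_left by linarith
    moreover have "0 \<le> integral {0..s'} u"
      using uint[of 0 s'] s' u0 by (intro integral_nonneg) auto
    then have "0 \<le> N * R * integral {0..s'} u" using \<open>N * R \<ge> 0\<close> by simp
    ultimately show ?thesis unfolding neg_def by simp
  qed
  have ub: "u s' \<le> 0 + (N * (N * R)) * integral {0..s'} u" if s': "s' \<in> {0..t}" for s'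
  proof -
    have "u s' \<le> (\<Sum>i\<in>(UNIV::'n set). (N * R) * integral {0..s'} u)"
      unfolding u_def[of s'] by (rule sum_mono) (rule key[OF s'])
    then show ?thesis by (simp add: N_def)
  qed
  have "u s \<le> 0 * exp ((N * (N * R)) * s)"
    by (rule gronwall[OF uc _ ub s]) (use N0 R in simp)
  then have "u s = 0" using u0[of s] by simp
  then have "neg i s = 0" for i
    using sum_nonneg_eq_0_iff[of UNIV "\<lambda>i. neg i s"] neg0 unfolding u_def by auto
  have "0 \<le> y s $ i" for i
  proof -
    have "- (y s $ i) \<le> neg i s" unfolding neg_def by simp
    then show ?thesis using \<open>\<And>i. neg i s = 0\<close>[of i] by linarith
  qed
  then show ?thesis unfolding orthant_def by auto
qed

end

context ctrl begin

lemma int_pow: "((\<lambda>r::real. r ^ k) has_integral (s ^ Suc k / Suc k)) {0..s}" if "0 \<le> s"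
proof -
  have "((\<lambda>r::real. r ^ k) has_integral ((\<lambda>r. r ^ Suc k / Suc k) s - (\<lambda>r. r ^ Suc k / Suc k) 0)) {0..s}"
  proof (rule fundamental_theorem_of_calculus[OF that])
    fix r :: real assume "r \<in> {0..s}"
    have "((\<lambda>r. r ^ Suc k / Suc k) has_real_derivative (real (Suc k) * r ^ k / Suc k)) (at r within {0..s})"
      by (intro derivative_eq_intros) auto
    then show "((\<lambda>r. r ^ Suc k / real (Suc k)) has_vector_derivative r ^ k) (at r within {0..s})"
      by (simp add: has_real_derivative_iff_has_vector_derivative del: of_nat_Suc)
  qed
  then show ?thesis by simp
qed

lemma traj_exists:
  assumes adm: "admissible_control Ms t M"
  shows "\<exists>y. is_trajectory M x t y"
proof (cases "0 \<le> t")
  case False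
  then show ?thesis unfolding is_trajectory_def by auto
next
  case t0: True
  define P where "P z = (\<lambda>s. x + integral {0..s} (\<lambda>r. M r *v z r))" for z :: "real \<Rightarrow> real^'n"
  define Y where "Y = rec_nat (\<lambda>s. x) (\<lambda>k z. P z)"
  have Y0: "Y 0 = (\<lambda>s. x)" and YS: "Y (Suc k) = P (Y k)" for k unfolding Y_def by simp_all
  have Ycont: "continuous_on {0..t} (Y k)" for k
  proof (induction k)
    case 0 then show ?case by (simp add: Y0)
  next
    case (Suc k)
    have "(\<lambda>r. M r *v Y k r) integrable_on {0..t}" by (rule integrable_mv'[OF adm Suc order_refl])
    then have "continuous_on {0..t} (\<lambda>s. integral {0..s} (\<lambda>r. M r *v Y k r))"
      by (rule indefinite_integral_continuous_1)
    then show ?case unfolding YS P_def by (intro continuous_intros)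
  qed
  have Yint: "(\<lambda>r. M r *v Y k r) integrable_on {0..s}" if "s \<in> {0..t}" for k s
    using that by (intro integrable_mv'[OF adm Ycont]) auto
  have Mr: "M r \<in> Ms" if "r \<in> {0..t}" for r using adm that unfolding admissible_control_def by auto
  define D where "D k s = Y (Suc k) s - Y k s" for k s
  have Dbound: "norm (D k s) \<le> norm x * (R * s) ^ Suc k / fact (Suc k)" if "s \<in> {0..t}" for k s
    using that
  proof (induction k arbitrary: s)
    case 0
    have "D 0 s = integral {0..s} (\<lambda>r. M r *v x)" unfolding D_def YS Y0 P_def by simp
    also have "norm \<dots> \<le> integral {0..s} (\<lambda>r. R * norm x)"
    proof (rule integral_norm_bound_integral)
      show "(\<lambda>r. M r *v x) integrable_on {0..s}" using Yint[OF 0, of 0] by (simp add: Y0)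
      show "(\<lambda>r. R * norm x) integrable_on {0..s}" by (rule integrable_const_ivl)
      fix r assume "r \<in> {0..s}" then show "norm (M r *v x) \<le> R * norm x" using 0 by (intro bnd Mr) auto
    qed
    also have "\<dots> = norm x * (R * s) ^ Suc 0 / fact (Suc 0)" using 0 by simp
    finally show ?case .
  next
    case (Suc k)
    have "D (Suc k) s = integral {0..s} (\<lambda>r. M r *v Y (Suc k) r) - integral {0..s} (\<lambda>r. M r *v Y k r)"
      unfolding D_def YS[of "Suc k"] YS[of k] P_def by simp
    also have "\<dots> = integral {0..s} (\<lambda>r. M r *v D k r)"
      unfolding D_def using Yint[OF Suc.prems, of "Suc k"] Yint[OF Suc.prems, of k]
      by (simp add: integral_diff matrix_vector_mult_diff_distrib)
    also have "norm \<dots> \<le> integral {0..s} (\<lambda>r. R * (norm x * (R * r) ^ Suc k / fact (Suc k)))"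
    proof (rule integral_norm_bound_integral)
      show "(\<lambda>r. M r *v D k r) integrable_on {0..s}"
        unfolding D_def using integrable_diff[OF Yint[OF Suc.prems, of "Suc k"] Yint[OF Suc.prems, of k]]
        by (simp add: matrix_vector_mult_diff_distrib)
      show "(\<lambda>r. R * (norm x * (R * r) ^ Suc k / fact (Suc k))) integrable_on {0..s}"
        by (intro integrable_continuous_real continuous_intros) auto
      fix r assume r: "r \<in> {0..s}"
      then have rt: "r \<in> {0..t}" using Suc.prems by auto
      have "norm (M r *v D k r) \<le> R * norm (D k r)" by (rule bnd[OF Mr[OF rt]])
      also have "\<dots> \<le> R * (norm x * (R * r) ^ Suc k / fact (Suc k))"
        using Suc.IH[OF rt] R by (rule mult_left_mono)
      finally show "norm (M r *v D k r) \<le> R * (norm x * (R * r) ^ Suc k / fact (Suc k))" .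
    qed
    also have "integral {0..s} (\<lambda>r. R * (norm x * (R * r) ^ Suc k / fact (Suc k)))
        = (R * norm x * R ^ Suc k / fact (Suc k)) * integral {0..s} (\<lambda>r. r ^ Suc k)"
    proof -
      have "(\<lambda>r. R * (norm x * (R * r) ^ Suc k / fact (Suc k))) = (\<lambda>r. (R * norm x * R ^ Suc k / fact (Suc k)) * r ^ Suc k)"
        by (rule ext) (simp add: power_mult_distrib)
      then show ?thesis by (simp only: integral_mult_right)
    qed
    also have "\<dots> = (R * norm x * R ^ Suc k / fact (Suc k)) * (s ^ Suc (Suc k) / Suc (Suc k))"
      using int_pow[of s "Suc k"] Suc.prems by (simp add: integral_unique)
    also have "\<dots> = norm x * (R * s) ^ Suc (Suc k) / fact (Suc (Suc k))"
      by (simp add: power_mult_distrib field_simps del: of_nat_Suc)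
    finally show ?case .
  qed
  define B where "B k = norm x * (R * t) ^ Suc k / fact (Suc k)" for k
  have summ: "summable B"
  proof -
    have "summable (\<lambda>n. inverse (fact n) * (R * t) ^ n)" by (rule summable_exp)
    then have "summable (\<lambda>n. inverse (fact (Suc n)) * (R * t) ^ Suc n)"
      by (subst summable_Suc_iff)
    then have "summable (\<lambda>n. norm x * (inverse (fact (Suc n)) * (R * t) ^ Suc n))"
      by (rule summable_mult)
    then show ?thesis unfolding B_def by (simp add: field_simps)
  qed
  have Dle: "norm (D k s) \<le> B k" if "s \<in> {0..t}" for k s
  proof -
    have "(R * s) ^ Suc k \<le> (R * t) ^ Suc k"
      using that R by (intro power_mono mult_left_mono) auto
    then have "norm x * (R * s) ^ Suc k / fact (Suc k) \<le> norm x * (R * t) ^ Suc k / fact (Suc k)"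
      by (intro divide_right_mono mult_left_mono) auto
    then show ?thesis using Dbound[OF that, of k] unfolding B_def by linarith
  qed
  have unif: "uniform_limit {0..t} (\<lambda>n s. \<Sum>i<n. D i s) (\<lambda>s. \<Sum>i. D i s) sequentially"
    by (rule Weierstrass_m_test_ev[OF _ summ]) (use Dle in auto)
  define y where "y s = x + (\<Sum>i. D i s)" for s
  have tele: "Y n s = x + (\<Sum>i<n. D i s)" for n s
    unfolding D_def using sum_lessThan_telescope[of "\<lambda>k. Y k s" n] by (simp add: Y0)
  have Yconv: "\<forall>\<^sub>F n in sequentially. \<forall>s\<in>{0..t}. dist (Y n s) (y s) < e" if "e > 0" for e
  proof -
    from unif that have "\<forall>\<^sub>F n in sequentially. \<forall>s\<in>{0..t}. dist (\<Sum>i<n. D i s) (\<Sum>i. D i s) < e"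
      unfolding uniform_limit_iff by blast
    then show ?thesis unfolding tele y_def by (simp add: dist_norm)
  qed
  have ulY: "uniform_limit {0..t} Y y sequentially"
    unfolding uniform_limit_iff using Yconv by blast
  have ycont: "continuous_on {0..t} y"
    by (rule uniform_limit_theorem[OF _ ulY]) (use Ycont in simp_all)
  have yint: "(\<lambda>r. M r *v y r) integrable_on {0..s}" if "s \<in> {0..t}" for s
    using that by (intro integrable_mv'[OF adm ycont]) auto
  have yeq: "y s = x + integral {0..s} (\<lambda>r. M r *v y r)" if s: "s \<in> {0..t}" for s
  proof -
    have pt: "(\<lambda>n. Y n s) \<longlonglongrightarrow> y s"
      using tendsto_uniform_limitI[OF ulY s] .
    then have pt1: "(\<lambda>n. Y (Suc n) s) \<longlonglongrightarrow> y s" by (rule LIMSEQ_Suc)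
    have "(\<lambda>n. integral {0..s} (\<lambda>r. M r *v Y n r)) \<longlonglongrightarrow> integral {0..s} (\<lambda>r. M r *v y r)"
    proof (rule LIMSEQ_I)
      fix e :: real assume e: "e > 0"
      define e' where "e' = e / (R * t + 1)"
      have "R * t + 1 > 0" using R t0 by (smt (verit) mult_nonneg_nonneg)
      then have e': "e' > 0" unfolding e'_def using e by simp
      obtain N where N: "\<And>n. n \<ge> N \<Longrightarrow> \<forall>r\<in>{0..t}. dist (Y n r) (y r) < e'"
        using Yconv[OF e'] unfolding eventually_sequentially by blast
      show "\<exists>N. \<forall>n\<ge>N. norm (integral {0..s} (\<lambda>r. M r *v Y n r) - integral {0..s} (\<lambda>r. M r *v y r)) < e"
      proof (intro exI allI impI)
        fix n assume n: "n \<ge> N"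
        have "integral {0..s} (\<lambda>r. M r *v Y n r) - integral {0..s} (\<lambda>r. M r *v y r)
            = integral {0..s} (\<lambda>r. M r *v (Y n r - y r))"
          using Yint[OF s, of n] yint[OF s] by (simp add: integral_diff matrix_vector_mult_diff_distrib)
        also have "norm \<dots> \<le> integral {0..s} (\<lambda>r. R * e')"
        proof (rule integral_norm_bound_integral)
          show "(\<lambda>r. M r *v (Y n r - y r)) integrable_on {0..s}"
            using integrable_diff[OF Yint[OF s, of n] yint[OF s]] by (simp add: matrix_vector_mult_diff_distrib)
          show "(\<lambda>r. R * e') integrable_on {0..s}" by (rule integrable_const_ivl)
          fix r assume r: "r \<in> {0..s}"
          then have rt: "r \<in> {0..t}" using s by auto
          have "norm (M r *v (Y n r - y r)) \<le> R * norm (Y n r - y r)" by (rule bnd[OF Mr[OF rt]])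
          also have "\<dots> \<le> R * e'"
            using N[OF n] rt R by (intro mult_left_mono) (auto simp: dist_norm less_imp_le)
          finally show "norm (M r *v (Y n r - y r)) \<le> R * e'" .
        qed
        also have "\<dots> = R * e' * s" using s by simp
        also have "\<dots> \<le> R * e' * t" using s R e' by (intro mult_left_mono) auto
        also have "\<dots> < e"
        proof -
          have "R * t * e' < (R * t + 1) * e'" using e' by simp
          also have "\<dots> = e" unfolding e'_def using \<open>R * t + 1 > 0\<close> by simp
          finally show ?thesis by (simp add: mult_ac)
        qed
        finally show "norm (integral {0..s} (\<lambda>r. M r *v Y n r) - integral {0..s} (\<lambda>r. M r *v y r)) < e" .
      qed
    qed
    then have "(\<lambda>n. Y (Suc n) s) \<longlonglongrightarrow> x + integral {0..s} (\<lambda>r. M r *v y r)"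
      unfolding YS P_def by (intro tendsto_intros)
    from LIMSEQ_unique[OF pt1 this] show ?thesis .
  qed
  show ?thesis unfolding is_trajectory_def using ycont yint yeq by blast
qed

end

lemma leb_pre:
  fixes M :: "real \<Rightarrow> real^'n^'n"
  assumes "M \<in> borel_measurable (lebesgue_on {a..b})" "T \<in> sets borel"
  shows "{x \<in> {a..b}. M x \<in> T} \<in> sets lebesgue"
  using assms borel_measurable_lebesgue_on_preimage_borel[of "{a..b}" M] Icc_leb by blast

lemma leb_meas:
  fixes M :: "real \<Rightarrow> real^'n^'n"
  assumes "\<And>T. T \<in> sets borel \<Longrightarrow> {x \<in> {a..b}. M x \<in> T} \<in> sets lebesgue"
  shows "M \<in> borel_measurable (lebesgue_on {a..b})"
  using assms borel_measurable_lebesgue_on_preimage_borel[of "{a..b}" M] Icc_leb by blast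

context ctrl begin

lemma adm_shift:
  assumes adm: "admissible_control Ms (s + t) M" and s: "0 \<le> s"
  shows "admissible_control Ms t (\<lambda>r. M (s + r))"
  unfolding admissible_control_def
proof (intro conjI ballI)
  have Mm: "M \<in> borel_measurable (lebesgue_on {0..s+t})" using adm unfolding admissible_control_def by blast
  show "(\<lambda>r. M (s + r)) \<in> borel_measurable (lebesgue_on {0..t})"
  proof (rule leb_meas)
    fix T :: "(real^'n^'n) set" assume T: "T \<in> sets borel"
    have "{x \<in> {0..t}. M (s + x) \<in> T} = (\<lambda>z. - s + z) ` ({z \<in> {0..s+t}. M z \<in> T} \<inter> {s..s+t})"
    proof (rule set_eqI, rule iffI)
      fix x assume "x \<in> {x \<in> {0..t}. M (s + x) \<in> T}"
      then show "x \<in> (\<lambda>z. - s + z) ` ({z \<in> {0..s+t}. M z \<in> T} \<inter> {s..s+t})"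
        using s by (intro image_eqI[of _ _ "s + x"]) auto
    next
      fix x assume "x \<in> (\<lambda>z. - s + z) ` ({z \<in> {0..s+t}. M z \<in> T} \<inter> {s..s+t})"
      then show "x \<in> {x \<in> {0..t}. M (s + x) \<in> T}" by auto
    qed
    also have "\<dots> \<in> sets lebesgue"
      by (intro lebesgue_sets_translation sets.Int leb_pre[OF Mm T] Icc_leb)
    finally show "{x \<in> {0..t}. M (s + x) \<in> T} \<in> sets lebesgue" .
  qed
  fix r assume "r \<in> {0..t}"
  then show "M (s + r) \<in> Ms" using adm s unfolding admissible_control_def by auto
qed

lemma traj_shift:
  assumes tr: "is_trajectory M x (s + t) y" and s: "0 \<le> s" and t: "0 \<le> t"
  shows "is_trajectory (\<lambda>r. M (s + r)) (y s) t (\<lambda>r. y (s + r))"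
  unfolding is_trajectory_def
proof (intro conjI ballI)
  have yc: "continuous_on {0..s+t} y" by (rule traj_cont[OF tr])
  show "continuous_on {0..t} (\<lambda>r. y (s + r))"
    using s by (intro continuous_on_compose2[OF yc] continuous_intros) auto
  fix r assume r: "r \<in> {0..t}"
  have sr: "s + r \<in> {0..s+t}" and s': "s \<in> {0..s+t}" using r s t by auto
  have gi: "(\<lambda>q. M q *v y q) integrable_on {0..s + r}" by (rule traj_int[OF tr sr])
  have gi2: "(\<lambda>q. M q *v y q) integrable_on {s..s + r}"
    by (rule integrable_subinterval_real[OF gi]) (use s in auto)
  have comb: "integral {0..s} (\<lambda>q. M q *v y q) + integral {s..s + r} (\<lambda>q. M q *v y q)
      = integral {0..s + r} (\<lambda>q. M q *v y q)"
    using s r by (intro Henstock_Kurzweil_Integration.integral_combine[OF _ _ gi]) auto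
  have "((\<lambda>q. M q *v y q) has_integral integral {s..s + r} (\<lambda>q. M q *v y q)) {0 + s..r + s}"
    using integrable_integral[OF gi2] by (simp add: add.commute)
  then have sh: "(((\<lambda>q. M q *v y q) \<circ> (+) s) has_integral integral {s..s + r} (\<lambda>q. M q *v y q)) {0..r}"
    unfolding has_integral_shift_Icc_real .
  then have sh': "((\<lambda>q. M (s + q) *v y (s + q)) has_integral integral {s..s + r} (\<lambda>q. M q *v y q)) {0..r}"
    by (simp add: o_def)
  then show "(\<lambda>q. M (s + q) *v y (s + q)) integrable_on {0..r}" by blast
  have "y (s + r) = y s + integral {s..s + r} (\<lambda>q. M q *v y q)"
    using traj_eq[OF tr sr] traj_eq[OF tr s'] comb by (simp add: algebra_simps)
  also have "integral {s..s + r} (\<lambda>q. M q *v y q) = integral {0..r} (\<lambda>q. M (s + q) *v y (s + q))"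
    using sh' by (simp add: integral_unique)
  finally show "y (s + r) = y s + integral {0..r} (\<lambda>q. M (s + q) *v y (s + q))" .
qed

lemma adm_glue:
  assumes adm1: "admissible_control Ms s M1" and adm2: "admissible_control Ms t M2" and s: "0 \<le> s"
    and t: "0 \<le> t"
  shows "admissible_control Ms (s + t) (\<lambda>r. if r \<le> s then M1 r else M2 (r - s))"
  unfolding admissible_control_def
proof (intro conjI ballI)
  have M1m: "M1 \<in> borel_measurable (lebesgue_on {0..s})" using adm1 unfolding admissible_control_def by blast
  have M2m: "M2 \<in> borel_measurable (lebesgue_on {0..t})" using adm2 unfolding admissible_control_def by blast
  show "(\<lambda>r. if r \<le> s then M1 r else M2 (r - s)) \<in> borel_measurable (lebesgue_on {0..s + t})"
  proof (rule leb_meas)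
    fix T :: "(real^'n^'n) set" assume T: "T \<in> sets borel"
    have "{x \<in> {0..s + t}. (if x \<le> s then M1 x else M2 (x - s)) \<in> T}
      = {x \<in> {0..s}. M1 x \<in> T} \<union> ((\<lambda>z. s + z) ` {z \<in> {0..t}. M2 z \<in> T} \<inter> {s<..})"
    proof (rule set_eqI, rule iffI)
      fix x assume x: "x \<in> {x \<in> {0..s + t}. (if x \<le> s then M1 x else M2 (x - s)) \<in> T}"
      show "x \<in> {x \<in> {0..s}. M1 x \<in> T} \<union> ((\<lambda>z. s + z) ` {z \<in> {0..t}. M2 z \<in> T} \<inter> {s<..})"
      proof (cases "x \<le> s")
        case True then show ?thesis using x by auto
      next
        case False
        then have "x \<in> (\<lambda>z. s + z) ` {z \<in> {0..t}. M2 z \<in> T}"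
          using x by (intro image_eqI[of _ _ "x - s"]) auto
        then show ?thesis using False by auto
      qed
    next
      fix x assume "x \<in> {x \<in> {0..s}. M1 x \<in> T} \<union> ((\<lambda>z. s + z) ` {z \<in> {0..t}. M2 z \<in> T} \<inter> {s<..})"
      then show "x \<in> {x \<in> {0..s + t}. (if x \<le> s then M1 x else M2 (x - s)) \<in> T}"
        using s t by auto
    qed
    also have "\<dots> \<in> sets lebesgue"
      by (intro sets.Un sets.Int lebesgue_sets_translation leb_pre[OF M1m T] leb_pre[OF M2m T])
         (simp add: borel_open)
    finally show "{x \<in> {0..s + t}. (if x \<le> s then M1 x else M2 (x - s)) \<in> T} \<in> sets lebesgue" .
  qed
  fix r assume "r \<in> {0..s + t}"
  then show "(if r \<le> s then M1 r else M2 (r - s)) \<in> Ms"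
    using adm1 adm2 unfolding admissible_control_def by auto
qed

lemma traj_glue:
  assumes tr1: "is_trajectory M1 x s y1" and tr2: "is_trajectory M2 (y1 s) t y2"
    and s: "0 \<le> s" and t: "0 \<le> t"
  shows "is_trajectory (\<lambda>r. if r \<le> s then M1 r else M2 (r - s)) x (s + t)
            (\<lambda>r. if r \<le> s then y1 r else y2 (r - s))"
  unfolding is_trajectory_def
proof (intro conjI ballI)
  define M where "M r = (if r \<le> s then M1 r else M2 (r - s))" for r
  define y where "y r = (if r \<le> s then y1 r else y2 (r - s))" for r
  have y20: "y2 0 = y1 s" by (rule traj_0[OF tr2 t])
  have c1: "continuous_on {0..s} y1" by (rule traj_cont[OF tr1])
  have c2: "continuous_on {0..t} y2" by (rule traj_cont[OF tr2])
  show "continuous_on {0..s + t} (\<lambda>r. if r \<le> s then y1 r else y2 (r - s))"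
  proof (rule continuous_on_cases_le)
    show "continuous_on {r \<in> {0..s + t}. r \<le> s} y1"
      by (rule continuous_on_subset[OF c1]) auto
    show "continuous_on {r \<in> {0..s + t}. s \<le> r} (\<lambda>r. y2 (r - s))"
      by (rule continuous_on_compose2[OF c2]) (auto intro!: continuous_intros)
    show "continuous_on {0..s + t} (\<lambda>r. r)" by (intro continuous_intros)
  qed (simp add: y20)
  fix r assume r: "r \<in> {0..s + t}"
  have "((\<lambda>q. M q *v y q) has_integral (y r - x)) {0..r}"
  proof (cases "r \<le> s")
    case True
    then have rs: "r \<in> {0..s}" using r by auto
    have "((\<lambda>q. M1 q *v y1 q) has_integral (y1 r - x)) {0..r}"
      using traj_int[OF tr1 rs] traj_eq[OF tr1 rs] by (simp add: has_integral_iff)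
    moreover have "y r = y1 r" using True by (simp add: y_def)
    ultimately show ?thesis using True
      by (subst has_integral_cong[of _ _ "\<lambda>q. M1 q *v y1 q"]) (auto simp: M_def y_def)
  next
    case False
    have ss: "s \<in> {0..s}" using s by auto
    have rt: "r - s \<in> {0..t}" using r False by auto
    have A: "((\<lambda>q. M q *v y q) has_integral (y1 s - x)) {0..s}"
    proof -
      have "((\<lambda>q. M1 q *v y1 q) has_integral (y1 s - x)) {0..s}"
        using traj_int[OF tr1 ss] traj_eq[OF tr1 ss] by (simp add: has_integral_iff)
      then show ?thesis by (subst has_integral_cong[of _ _ "\<lambda>q. M1 q *v y1 q"]) (auto simp: M_def y_def)
    qed
    have B0: "((\<lambda>q. M2 q *v y2 q) has_integral (y2 (r - s) - y1 s)) {0..r - s}"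
      using traj_int[OF tr2 rt] traj_eq[OF tr2 rt] by (simp add: has_integral_iff)
    have B1: "(((\<lambda>q. M2 (q - s) *v y2 (q - s)) \<circ> (+) s) has_integral (y2 (r - s) - y1 s)) {0..r - s}"
      using B0 by (simp add: o_def)
    have B2: "((\<lambda>q. M2 (q - s) *v y2 (q - s)) has_integral (y2 (r - s) - y1 s)) {s..r}"
      using has_integral_shift_Icc_real[of "\<lambda>q. M2 (q - s) *v y2 (q - s)" s _ 0 "r - s"] B1
      by (simp add: add.commute)
    have B: "((\<lambda>q. M q *v y q) has_integral (y2 (r - s) - y1 s)) {s..r}"
    proof (subst has_integral_spike_finite_eq[of "{s}"])
      show "finite {s}" by simp
      show "((\<lambda>q. M2 (q - s) *v y2 (q - s)) has_integral (y2 (r - s) - y1 s)) {s..r}" by (rule B2)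
    qed (auto simp: M_def y_def)
    have "((\<lambda>q. M q *v y q) has_integral ((y1 s - x) + (y2 (r - s) - y1 s))) {0..r}"
      by (rule has_integral_combine[OF _ _ A B]) (use s False in auto)
    then show ?thesis using False by (simp add: y_def)
  qed
  then show "(\<lambda>q. (if q \<le> s then M1 q else M2 (q - s)) *v (if q \<le> s then y1 q else y2 (q - s))) integrable_on {0..r}"
    and "(if r \<le> s then y1 r else y2 (r - s)) = x + integral {0..r} (\<lambda>q. (if q \<le> s then M1 q else M2 (q - s)) *v (if q \<le> s then y1 q else y2 (q - s)))"
    unfolding M_def y_def by (auto simp: has_integral_iff)
qed

lemma reach_split:
  assumes "z \<in> reachable Ms (s + t) x" "0 \<le> s" "0 \<le> t"
  shows "\<exists>w \<in> reachable Ms s x. z \<in> reachable Ms t w"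
proof -
  from assms(1) obtain M y where z: "z = y (s + t)" and adm: "admissible_control Ms (s + t) M"
    and tr: "is_trajectory M x (s + t) y" unfolding reachable_def by blast
  have st: "s \<le> s + t" using assms(3) by simp
  have "y s \<in> reachable Ms s x"
    unfolding reachable_def using adm_restrict[OF adm st] traj_restrict[OF tr st] by blast
  moreover have "z \<in> reachable Ms t (y s)"
    unfolding reachable_def using adm_shift[OF adm assms(2)] traj_shift[OF tr assms(2,3)] z by fastforce
  ultimately show ?thesis by blast
qed

lemma reach_glue:
  assumes "w \<in> reachable Ms s x" "z \<in> reachable Ms t w" "0 \<le> s" "0 \<le> t"
  shows "z \<in> reachable Ms (s + t) x"
proof -
  from assms(1) obtain M1 y1 where w: "w = y1 s" and adm1: "admissible_control Ms s M1"
    and tr1: "is_trajectory M1 x s y1" unfolding reachable_def by blast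
  from assms(2) obtain M2 y2 where z: "z = y2 t" and adm2: "admissible_control Ms t M2"
    and tr2: "is_trajectory M2 w t y2" unfolding reachable_def by blast
  have "(\<lambda>r. if r \<le> s then y1 r else y2 (r - s)) (s + t) = z"
  proof (cases "t = 0")
    case True
    then show ?thesis using z w traj_0[OF tr2] by simp
  next
    case False then show ?thesis using assms(4) z by simp
  qed
  note zz = this
  show ?thesis
    unfolding reachable_def
    apply (rule CollectI, rule exI[of _ "\<lambda>r. if r \<le> s then M1 r else M2 (r - s)"],
           rule exI[of _ "\<lambda>r. if r \<le> s then y1 r else y2 (r - s)"])
    using adm_glue[OF adm1 adm2 assms(3,4)] traj_glue[OF tr1 tr2[unfolded w] assms(3,4)] zz by simp
qed

end

context ctrl begin

lemma adm_const: "m \<in> Ms \<Longrightarrow> admissible_control Ms t (\<lambda>_. m)"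
  unfolding admissible_control_def by simp

lemma const_traj_deriv:
  assumes tr: "is_trajectory (\<lambda>_. A) x t y" and s: "s \<in> {0..t}"
  shows "((\<lambda>u. y u $ i) has_real_derivative (A *v y s) $ i) (at s within {0..t})"
proof -
  have yc: "continuous_on {0..t} y" by (rule traj_cont[OF tr])
  have gc: "continuous_on {0..t} (\<lambda>r. A *v y r)"
    by (rule linear_continuous_on_compose[OF yc matrix_vector_mul_linear])
  have "((\<lambda>u. x + integral {0..u} (\<lambda>r. A *v y r)) has_vector_derivative (A *v y s)) (at s within {0..t})"
    using integral_has_vector_derivative[OF gc s] by (intro derivative_eq_intros) auto
  then have d: "(y has_vector_derivative (A *v y s)) (at s within {0..t})"
    by (rule has_vector_derivative_transform[OF s, rotated]) (use traj_eq[OF tr] in auto)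
  then have "(y has_derivative (\<lambda>h. h *\<^sub>R (A *v y s))) (at s within {0..t})"
    by (simp add: has_vector_derivative_def)
  then have "((\<lambda>u. y u $ i) has_derivative (\<lambda>h. (h *\<^sub>R (A *v y s)) $ i)) (at s within {0..t})"
    by (rule bounded_linear.has_derivative[OF bounded_linear_vec_nth])
  moreover have "(\<lambda>h. (h *\<^sub>R (A *v y s)) $ i) = (*) ((A *v y s) $ i)"
    by (auto simp: mult.commute)
  ultimately show ?thesis by (simp add: has_field_derivative_def)
qed

lemma rate_lower:
  assumes A: "A \<in> Ms" and y: "y \<in> orthant" and ij: "j \<noteq> i"
  shows "R * y $ i + (A *v y) $ i \<ge> A $ i $ j * y $ j" and "R * y $ i + (A *v y) $ i \<ge> 0"
proof -
  have yn: "y $ k \<ge> 0" for k using y unfolding orthant_def by auto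
  have off: "A $ i $ k * y $ k \<ge> 0" if "k \<noteq> i" for k
    using metz[OF A] that yn[of k] unfolding metzler_def by auto
  have "(A *v y) $ i = A $ i $ i * y $ i + (\<Sum>k\<in>UNIV - {i}. A $ i $ k * y $ k)"
    unfolding matrix_vector_mult_def by (simp add: sum.remove[of UNIV i])
  moreover have "R * y $ i + A $ i $ i * y $ i \<ge> 0"
  proof -
    have "\<bar>A $ i $ i\<bar> \<le> R" by (rule comp[OF A])
    then have "- R \<le> A $ i $ i" by linarith
    then have "(- R) * y $ i \<le> A $ i $ i * y $ i" using yn[of i] by (rule mult_right_mono)
    then show ?thesis by simp
  qed
  moreover have "(\<Sum>k\<in>UNIV - {i}. A $ i $ k * y $ k) \<ge> A $ i $ j * y $ j"
    using ij off by (intro member_le_sum) auto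
  moreover have "(\<Sum>k\<in>UNIV - {i}. A $ i $ k * y $ k) \<ge> 0"
    using off by (intro sum_nonneg) auto
  ultimately show "R * y $ i + (A *v y) $ i \<ge> A $ i $ j * y $ j" and "R * y $ i + (A *v y) $ i \<ge> 0"
    by linarith+
qed

lemma const_mvt:
  assumes A: "A \<in> Ms" and tr: "is_trajectory (\<lambda>_. A) x t y" and x: "x \<in> orthant"
    and ab: "0 \<le> a" "a < b" "b \<le> t"
  obtains z where "a < z" "z < b"
    "exp (R * b) * y b $ i - exp (R * a) * y a $ i = (b - a) * (exp (R * z) * (R * y z $ i + (A *v y z) $ i))"
proof -
  define f where "f u = exp (R * u) * y u $ i" for u
  have adm: "admissible_control Ms t (\<lambda>_. A)" by (rule adm_const[OF A])
  have yc: "continuous_on {0..t} y" by (rule traj_cont[OF tr])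
  have fc: "continuous_on {a..b} f"
    unfolding f_def using ab by (intro continuous_intros continuous_on_subset[OF yc]) auto
  have fd: "(f has_real_derivative exp (R * u) * (R * y u $ i + (A *v y u) $ i)) (at u)" if "a < u" "u < b" for u
  proof -
    have u: "u \<in> {0..t}" using that ab by auto
    have "((\<lambda>u. y u $ i) has_real_derivative (A *v y u) $ i) (at u)"
      using const_traj_deriv[OF tr u, of i] that ab by (simp add: at_within_Icc_at)
    then have "(f has_real_derivative (R * exp (R * u) * y u $ i + exp (R * u) * (A *v y u) $ i)) (at u)"
      unfolding f_def by (auto intro!: derivative_eq_intros)
    then show ?thesis by (simp add: algebra_simps)
  qed
  have fdiff: "f differentiable (at u)" if "a < u" "u < b" for u
    using fd[OF that] unfolding real_differentiable_def by blast
  obtain l z where z: "a < z" "z < b" "DERIV f z :> l" "f b - f a = (b - a) * l"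
    using MVT[OF ab(2) fc fdiff] by blast
  have "l = exp (R * z) * (R * y z $ i + (A *v y z) $ i)"
    using DERIV_unique[OF z(3) fd[OF z(1,2)]] .
  then show ?thesis using that z unfolding f_def by auto
qed

lemma const_mono:
  assumes A: "A \<in> Ms" and tr: "is_trajectory (\<lambda>_. A) x t y" and x: "x \<in> orthant"
    and ab: "0 \<le> a" "a \<le> b" "b \<le> t"
  shows "exp (R * a) * y a $ i \<le> exp (R * b) * y b $ i"
proof (cases "a = b")
  case False
  then have ab': "a < b" using ab by auto
  obtain z where z: "a < z" "z < b"
    "exp (R * b) * y b $ i - exp (R * a) * y a $ i = (b - a) * (exp (R * z) * (R * y z $ i + (A *v y z) $ i))"
    using const_mvt[OF A tr x ab(1) ab' ab(3)] .
  have "y z \<in> orthant" using traj_pos[OF adm_const[OF A] tr x] z ab by auto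
  then have "R * y z $ i + (A *v y z) $ i \<ge> 0"
  proof -
    obtain j :: 'n where "True" by simp
    show ?thesis
    proof (cases "\<exists>j::'n. j \<noteq> i")
      case True
      then obtain j where "j \<noteq> i" by blast
      then show ?thesis using rate_lower(2)[OF A \<open>y z \<in> orthant\<close>] by blast
    next
      case False
      then have "UNIV = {i}" by auto
      have "(A *v y z) $ i = (\<Sum>j\<in>UNIV. A $ i $ j * y z $ j)"
        by (simp add: matrix_vector_mult_def)
      also have "\<dots> = (\<Sum>j\<in>{i}. A $ i $ j * y z $ j)" by (simp only: \<open>UNIV = {i}\<close>)
      finally have "(A *v y z) $ i = A $ i $ i * y z $ i" by simp
      moreover have "\<bar>A $ i $ i\<bar> \<le> R" by (rule comp[OF A])
      moreover have "y z $ i \<ge> 0" using \<open>y z \<in> orthant\<close> unfolding orthant_def by auto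
      ultimately have "(- R) * y z $ i \<le> A $ i $ i * y z $ i"
        by (intro mult_right_mono) auto
      then show ?thesis using \<open>(A *v y z) $ i = A $ i $ i * y z $ i\<close> by simp
    qed
  qed
  then have "(b - a) * (exp (R * z) * (R * y z $ i + (A *v y z) $ i)) \<ge> 0"
    using ab' by simp
  then show ?thesis using z(3) by linarith
qed simp

lemma const_strict:
  assumes A: "A \<in> Ms" and tr: "is_trajectory (\<lambda>_. A) x t y" and x: "x \<in> orthant"
    and ab: "0 \<le> a" "a < b" "b \<le> t" and ij: "j \<noteq> i" "A $ i $ j > 0" and yj: "y a $ j > 0"
  shows "exp (R * a) * y a $ i < exp (R * b) * y b $ i"
proof -
  obtain z where z: "a < z" "z < b"
    "exp (R * b) * y b $ i - exp (R * a) * y a $ i = (b - a) * (exp (R * z) * (R * y z $ i + (A *v y z) $ i))"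
    using const_mvt[OF A tr x ab] .
  have yz: "y z \<in> orthant" using traj_pos[OF adm_const[OF A] tr x] z ab by auto
  have "exp (R * a) * y a $ j \<le> exp (R * z) * y z $ j"
    using const_mono[OF A tr x, of a z j] z ab by auto
  moreover have "0 < exp (R * a) * y a $ j" using yj by simp
  ultimately have "0 < exp (R * z) * y z $ j" by linarith
  then have "y z $ j > 0" by (simp add: zero_less_mult_iff)
  then have "A $ i $ j * y z $ j > 0" using ij by simp
  then have "R * y z $ i + (A *v y z) $ i > 0" using rate_lower(1)[OF A yz ij(1)] by linarith
  then have "(b - a) * (exp (R * z) * (R * y z $ i + (A *v y z) $ i)) > 0"
    using ab by simp
  then show ?thesis using z(3) by linarith
qed

end

definition csum :: "real^'n \<Rightarrow> real" where "csum x = (\<Sum>i\<in>UNIV. x $ i)"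

locale irr = ctrl Ms R for Ms :: "(real^'n^'n) set" and R +
  fixes m0 assumes m0: "m0 \<in> Ms" and irr: "irreducible_mat m0"
begin

lemma supp_mono:
  assumes tr: "is_trajectory (\<lambda>_. m0) x t y" and x: "x \<in> orthant"
    and ab: "0 \<le> a" "a \<le> b" "b \<le> t" and ya: "y a $ i > 0"
  shows "y b $ i > 0"
proof -
  have "exp (R * a) * y a $ i \<le> exp (R * b) * y b $ i" by (rule const_mono[OF m0 tr x ab])
  moreover have "0 < exp (R * a) * y a $ i" using ya by simp
  ultimately have "0 < exp (R * b) * y b $ i" by linarith
  then show ?thesis by (simp add: zero_less_mult_iff)
qed

lemma supp_grow:
  assumes tr: "is_trajectory (\<lambda>_. m0) x t y" and x: "x \<in> orthant"
    and ab: "0 \<le> a" "a < b" "b \<le> t"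
    and ne: "{i. y a $ i > 0} \<noteq> {}" "{i. y a $ i > 0} \<noteq> UNIV"
  shows "{i. y a $ i > 0} \<subset> {i. y b $ i > 0}"
proof -
  let ?P = "{i. y a $ i > 0}"
  have sub: "?P \<subseteq> {i. y b $ i > 0}" using supp_mono[OF tr x ab(1) _ ab(3)] ab(2) by auto
  have "- ?P \<noteq> {}" "- ?P \<noteq> UNIV" using ne by auto
  then have "\<exists>i\<in>- ?P. \<exists>j\<in>- (- ?P). m0 $ i $ j > 0"
    using irr unfolding irreducible_mat_def by (elim allE[of _ "- ?P"]) (simp only: simp_thms)
  then obtain i j where ij: "i \<in> - ?P" "j \<in> - (- ?P)" "m0 $ i $ j > 0" by blast
  then have ji: "j \<noteq> i" by auto
  have yj: "y a $ j > 0" using ij by auto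
  have "exp (R * a) * y a $ i < exp (R * b) * y b $ i"
    by (rule const_strict[OF m0 tr x ab ji ij(3) yj])
  moreover have "y a \<in> orthant" using traj_pos[OF adm_const[OF m0] tr x] ab by auto
  then have "0 \<le> exp (R * a) * y a $ i" unfolding orthant_def by auto
  ultimately have "0 < exp (R * b) * y b $ i" by linarith
  then have "y b $ i > 0" by (simp add: zero_less_mult_iff)
  then show ?thesis using sub ij(1) by auto
qed

lemma full_support:
  assumes tr: "is_trajectory (\<lambda>_. m0) x t y" and x: "x \<in> orthant" and x0: "x \<noteq> 0"
    and T: "0 < T" "T \<le> t"
  shows "y T $ i > 0"
proof -
  define N where "N = CARD('n)"
  have N1: "N \<ge> 1" unfolding N_def by (simp add: Suc_leI)
  define h where "h = T / N"
  have h0: "h > 0" unfolding h_def using T N1 by simp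
  let ?P = "\<lambda>u. {i. y u $ i > 0}"
  have kh: "real k * h \<le> T" if "k \<le> N" for k
  proof -
    have "real k * h = T * (real k / N)" unfolding h_def by simp
    also have "\<dots> \<le> T * 1" using that T N1 by (intro mult_left_mono) auto
    finally show ?thesis by simp
  qed
  have y0: "y 0 = x" using traj_0[OF tr] T by simp
  have P0: "?P 0 \<noteq> {}"
  proof
    assume "?P 0 = {}"
    then have "\<not> (y 0 $ k > 0)" for k by blast
    then have "x $ i \<le> 0" for i using y0 by (simp add: not_less)
    moreover have "x $ i \<ge> 0" for i using x unfolding orthant_def by auto
    ultimately have "x = 0" by (simp add: vec_eq_iff) (meson order_antisym)
    then show False using x0 by simp
  qed
  have claim: "card (?P (real k * h)) \<ge> k + 1" if "k < N" for k
    using that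
  proof (induction k)
    case 0
    then show ?case using P0 by (simp add: Suc_leI card_gt_0_iff)
  next
    case (Suc k)
    have IH: "card (?P (real k * h)) \<ge> k + 1" using Suc by simp
    have a0: "0 \<le> real k * h" using h0 by simp
    have ab: "real k * h < real (Suc k) * h" using h0 by simp
    have bt: "real (Suc k) * h \<le> t" using kh[of "Suc k"] Suc T by simp
    show ?case
    proof (cases "?P (real k * h) = UNIV")
      case True
      then have "?P (real (Suc k) * h) = UNIV"
        using supp_mono[OF tr x a0 less_imp_le[OF ab] bt] by auto
      then show ?thesis using Suc unfolding N_def by simp
    next
      case False
      have ne: "?P (real k * h) \<noteq> {}"
      proof
        assume "?P (real k * h) = {}"
        then have "card (?P (real k * h)) = 0" by (simp only: card.empty)
        then show False using IH by simp
      qed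
      have "?P (real k * h) \<subset> ?P (real (Suc k) * h)"
        by (rule supp_grow[OF tr x a0 ab bt ne False])
      then have "card (?P (real k * h)) < card (?P (real (Suc k) * h))"
        by (intro psubset_card_mono) auto
      then show ?thesis using IH by simp
    qed
  qed
  have "card (?P (real (N - 1) * h)) \<ge> N" using claim[of "N - 1"] N1 by simp
  then have full: "?P (real (N - 1) * h) = UNIV"
    using card_seteq[of UNIV "?P (real (N - 1) * h)"] unfolding N_def by auto
  have "0 \<le> real (N - 1) * h" using h0 by simp
  moreover have "real (N - 1) * h \<le> T" using kh[of "N - 1"] by simp
  ultimately show ?thesis
    using supp_mono[OF tr x _ _ T(2), of "real (N - 1) * h" i] full by auto
qed

end

context irr begin

lemma reachI: "admissible_control Ms t M \<Longrightarrow> is_trajectory M x t y \<Longrightarrow> y t \<in> reachable Ms t x"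
  unfolding reachable_def by blast

lemma reach_ne: "reachable Ms t x \<noteq> {}"
proof -
  obtain y where "is_trajectory (\<lambda>_. m0) x t y" using traj_exists[OF adm_const[OF m0]] by blast
  then show ?thesis unfolding reachable_def using adm_const[OF m0] by blast
qed

lemma reach_orth: "z \<in> reachable Ms t x \<Longrightarrow> x \<in> orthant \<Longrightarrow> 0 \<le> t \<Longrightarrow> z \<in> orthant"
  unfolding reachable_def using traj_pos by fastforce

lemma reach_norm: "z \<in> reachable Ms t x \<Longrightarrow> 0 \<le> t \<Longrightarrow> norm z \<le> norm x * exp (R * t)"
  unfolding reachable_def using traj_bound by fastforce

lemma reach_zero: "z \<in> reachable Ms t 0 \<Longrightarrow> 0 \<le> t \<Longrightarrow> z = 0"
  using reach_norm[of z t 0] by simp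

lemma reach_scale: "z \<in> reachable Ms t x \<Longrightarrow> c *\<^sub>R z \<in> reachable Ms t (c *\<^sub>R x)"
proof -
  assume "z \<in> reachable Ms t x"
  then obtain M y where z: "z = y t" "admissible_control Ms t M" "is_trajectory M x t y"
    unfolding reachable_def by blast
  then show ?thesis using reachI[OF z(2) traj_scale[OF z(3), of c]] by simp
qed

lemma reach_split_sum:
  assumes "z \<in> reachable Ms t (a + b)"
  shows "\<exists>za \<in> reachable Ms t a. z - za \<in> reachable Ms t b"
proof -
  from assms obtain M y where z: "z = y t" and adm: "admissible_control Ms t M"
    and tr: "is_trajectory M (a + b) t y" unfolding reachable_def by blast
  obtain ya where ya: "is_trajectory M a t ya" using traj_exists[OF adm] by blast
  have "is_trajectory M ((a + b) + (-1) *\<^sub>R a) t (\<lambda>s. y s + (-1) *\<^sub>R ya s)"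
    by (rule traj_add[OF tr traj_scale[OF ya]])
  then have yb: "is_trajectory M b t (\<lambda>s. y s - ya s)" by simp
  have "ya t \<in> reachable Ms t a" unfolding reachable_def using adm ya by blast
  moreover have "z - ya t \<in> reachable Ms t b" using reachI[OF adm yb] z by simp
  ultimately show ?thesis by blast
qed

lemma reach_join_sum:
  assumes "za \<in> reachable Ms t a"
  shows "\<exists>z \<in> reachable Ms t (a + b). z - za \<in> reachable Ms t b"
proof -
  from assms obtain M y where z: "za = y t" and adm: "admissible_control Ms t M"
    and tr: "is_trajectory M a t y" unfolding reachable_def by blast
  obtain yb where yb: "is_trajectory M b t yb" using traj_exists[OF adm] by blast
  have T: "is_trajectory M (a + b) t (\<lambda>s. y s + yb s)" by (rule traj_add[OF tr yb])
  have "y t + yb t \<in> reachable Ms t (a + b)" using reachI[OF adm T] by simp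
  moreover have "(y t + yb t) - za \<in> reachable Ms t b" using reachI[OF adm yb] z by simp
  ultimately show ?thesis by blast
qed

lemma reach_bounded: "0 \<le> t \<Longrightarrow> reachable Ms t x \<subseteq> cball 0 (norm x * exp (R * t))"
  using reach_norm by auto

lemma V_upper:
  assumes "bdd_above (f ` reachable Ms t x)" "z \<in> reachable Ms t x"
  shows "f z \<le> value_fun f Ms t x"
  unfolding value_fun_def using assms by (intro cSup_upper) auto

lemma V_least:
  assumes "\<And>z. z \<in> reachable Ms t x \<Longrightarrow> f z \<le> b"
  shows "value_fun f Ms t x \<le> b"
  unfolding value_fun_def using assms reach_ne by (intro cSup_least) auto

lemma bdd_reach:
  assumes "\<And>z. z \<in> orthant \<Longrightarrow> f z \<le> C * norm z" "x \<in> orthant" "0 \<le> t" "C \<ge> 0"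
  shows "bdd_above (f ` reachable Ms t x)"
proof (rule bdd_aboveI2)
  fix z assume z: "z \<in> reachable Ms t x"
  have "f z \<le> C * norm z" using assms(1) reach_orth[OF z assms(2,3)] by blast
  also have "\<dots> \<le> C * (norm x * exp (R * t))" using reach_norm[OF z assms(3)] assms(4) by (rule mult_left_mono)
  finally show "f z \<le> C * (norm x * exp (R * t))" .
qed

end

definition onev :: "real^'n" where "onev = (\<chi> i. 1)"

lemma csum_add: "csum (a + b) = csum a + csum b" unfolding csum_def by (simp add: sum.distrib)
lemma csum_scale: "csum (c *\<^sub>R a) = c * csum a" unfolding csum_def by (simp add: sum_distrib_left)
lemma csum_diff: "csum (a - b) = csum a - csum b" unfolding csum_def by (simp add: sum_subtractf)
lemma csum_nonneg: "x \<in> orthant \<Longrightarrow> 0 \<le> csum x" unfolding csum_def orthant_def by (auto intro: sum_nonneg)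
lemma norm_le_csum: "x \<in> orthant \<Longrightarrow> norm x \<le> csum x"
proof -
  assume "x \<in> orthant"
  then have "\<bar>x $ i\<bar> = x $ i" for i unfolding orthant_def by auto
  then show ?thesis using norm_le_l1_cart[of x] unfolding csum_def by simp
qed
lemma csum_le_norm: "csum x \<le> real CARD('n) * norm (x::real^'n)"
proof -
  have "csum x \<le> (\<Sum>i\<in>(UNIV::'n set). norm x)"
    unfolding csum_def by (rule sum_mono) (metis abs_le_D1 component_le_norm_cart)
  then show ?thesis by simp
qed
lemma csum_pos: "x \<in> orthant0 \<Longrightarrow> 0 < csum x"
proof -
  assume x: "x \<in> orthant0"
  then have nn: "\<forall>i\<in>UNIV. 0 \<le> x $ i" unfolding orthant0_def orthant_def by auto
  have "x \<noteq> 0" using x unfolding orthant0_def by auto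
  then obtain i where "x $ i \<noteq> 0" by (auto simp: vec_eq_iff)
  moreover have "0 \<le> x $ i" using nn by blast
  ultimately have "x $ i > 0" by linarith
  then have "0 < x $ i" .
  moreover have "x $ i \<le> csum x" unfolding csum_def using nn by (intro member_le_sum) auto
  ultimately show ?thesis by linarith
qed
lemma onev_orth: "onev \<in> orthant" unfolding onev_def orthant_def by simp
lemma csum_onev: "csum (onev::real^'n) = real CARD('n)" unfolding csum_def onev_def by simp
lemma orth_add: "a \<in> orthant \<Longrightarrow> b \<in> orthant \<Longrightarrow> a + b \<in> orthant" unfolding orthant_def by auto
lemma orth_scale: "a \<in> orthant \<Longrightarrow> 0 \<le> c \<Longrightarrow> c *\<^sub>R a \<in> orthant" unfolding orthant_def by auto

context irr begin

abbreviation VS where "VS t x \<equiv> value_fun csum Ms t x"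

lemma bdd_csum: "x \<in> orthant \<Longrightarrow> 0 \<le> t \<Longrightarrow> bdd_above (csum ` reachable Ms t x)"
  by (rule bdd_reach[OF _ _ _, of _ "real CARD('n)"]) (auto intro: csum_le_norm)

lemma VS_upper: "x \<in> orthant \<Longrightarrow> 0 \<le> t \<Longrightarrow> z \<in> reachable Ms t x \<Longrightarrow> csum z \<le> VS t x"
  by (rule V_upper[OF bdd_csum])

lemma VS_nonneg: "x \<in> orthant \<Longrightarrow> 0 \<le> t \<Longrightarrow> 0 \<le> VS t x"
proof -
  assume x: "x \<in> orthant" and t: "0 \<le> t"
  obtain z where z: "z \<in> reachable Ms t x" using reach_ne by blast
  have "0 \<le> csum z" using csum_nonneg reach_orth[OF z x t] by blast
  also have "\<dots> \<le> VS t x" by (rule VS_upper[OF x t z])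
  finally show ?thesis .
qed

lemma VS_zero: "0 \<le> t \<Longrightarrow> VS t 0 = 0"
proof -
  assume t: "0 \<le> t"
  have "VS t 0 \<le> 0"
  proof (rule V_least)
    fix z assume "z \<in> reachable Ms t 0"
    then have "z = 0" using reach_zero[OF _ t] by blast
    then show "csum z \<le> 0" by (simp add: csum_def)
  qed
  moreover have "0 \<le> VS t 0" using VS_nonneg[OF _ t] by (simp add: orthant_def)
  ultimately show ?thesis by simp
qed

lemma reach0: "reachable Ms 0 x = {x}"
proof
  show "reachable Ms 0 x \<subseteq> {x}" unfolding reachable_def using traj_0 by fastforce
  show "{x} \<subseteq> reachable Ms 0 x"
  proof -
    obtain z where z: "z \<in> reachable Ms 0 x" using reach_ne by blast
    then have "z = x" unfolding reachable_def using traj_0 by fastforce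
    then show ?thesis using z by simp
  qed
qed

lemma VS_0: "VS 0 x = csum x"
  unfolding value_fun_def reach0 by simp

lemma VS_mono:
  assumes t: "0 \<le> t" and a: "a \<in> orthant" and ab: "a - b \<in> orthant"
  shows "VS t b \<le> VS t a"
proof (rule V_least)
  fix z assume z: "z \<in> reachable Ms t b"
  obtain z' where z': "z' \<in> reachable Ms t (b + (a - b))" "z' - z \<in> reachable Ms t (a - b)"
    using reach_join_sum[OF z] by blast
  have "z' - z \<in> orthant" by (rule reach_orth[OF z'(2) ab t])
  then have "0 \<le> csum (z' - z)" by (rule csum_nonneg)
  then have "csum z \<le> csum z'" by (simp add: csum_diff)
  also have "\<dots> \<le> VS t a" using VS_upper[OF a t] z'(1) by simp
  finally show "csum z \<le> VS t a" .
qed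

lemma VS_scale:
  assumes t: "0 \<le> t" and x: "x \<in> orthant" and c: "c > 0"
  shows "VS t (c *\<^sub>R x) = c * VS t x"
proof (rule antisym)
  have cx: "c *\<^sub>R x \<in> orthant" using orth_scale[OF x] c by simp
  show "VS t (c *\<^sub>R x) \<le> c * VS t x"
  proof (rule V_least)
    fix z assume z: "z \<in> reachable Ms t (c *\<^sub>R x)"
    have "(1 / c) *\<^sub>R z \<in> reachable Ms t x" using reach_scale[OF z, of "1 / c"] c by simp
    then have "csum ((1 / c) *\<^sub>R z) \<le> VS t x" by (rule VS_upper[OF x t])
    then have "csum z / c \<le> VS t x" by (simp add: csum_scale)
    then show "csum z \<le> c * VS t x" using c by (simp add: field_simps)
  qed
  have "VS t x \<le> VS t (c *\<^sub>R x) / c"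
  proof (rule V_least)
    fix z assume z: "z \<in> reachable Ms t x"
    have "c *\<^sub>R z \<in> reachable Ms t (c *\<^sub>R x)" by (rule reach_scale[OF z])
    then have "csum (c *\<^sub>R z) \<le> VS t (c *\<^sub>R x)" by (rule VS_upper[OF cx t])
    then show "csum z \<le> VS t (c *\<^sub>R x) / c" using c by (simp add: csum_scale field_simps)
  qed
  then show "c * VS t x \<le> VS t (c *\<^sub>R x)" using c by (simp add: field_simps)
qed

lemma VS_subadd:
  assumes t: "0 \<le> t" and a: "a \<in> orthant" and b: "b \<in> orthant"
  shows "VS t (a + b) \<le> VS t a + VS t b"
proof (rule V_least)
  fix z assume z: "z \<in> reachable Ms t (a + b)"
  obtain za where za: "za \<in> reachable Ms t a" "z - za \<in> reachable Ms t b"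
    using reach_split_sum[OF z] by blast
  have "csum za \<le> VS t a" by (rule VS_upper[OF a t za(1)])
  moreover have "csum (z - za) \<le> VS t b" by (rule VS_upper[OF b t za(2)])
  ultimately show "csum z \<le> VS t a + VS t b" by (simp add: csum_diff)
qed

lemma VS_glue:
  assumes s: "0 \<le> s" and t: "0 \<le> t" and x: "x \<in> orthant" and w: "w \<in> reachable Ms s x"
  shows "VS t w \<le> VS (s + t) x"
proof (rule V_least)
  fix z assume "z \<in> reachable Ms t w"
  then have "z \<in> reachable Ms (s + t) x" by (rule reach_glue[OF w _ s t])
  then show "csum z \<le> VS (s + t) x" using VS_upper[OF x] s t by simp
qed

lemma VS_split:
  assumes s: "0 \<le> s" and t: "0 \<le> t" and x: "x \<in> orthant" and z: "z \<in> reachable Ms (s + t) x"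
  shows "\<exists>w\<in>reachable Ms s x. csum z \<le> VS t w"
proof -
  obtain w where w: "w \<in> reachable Ms s x" "z \<in> reachable Ms t w" using reach_split[OF z s t] by blast
  have "w \<in> orthant" by (rule reach_orth[OF w(1) x s])
  then have "csum z \<le> VS t w" using VS_upper[OF _ t w(2)] by blast
  then show ?thesis using w by blast
qed

definition B where "B t = VS t onev"

lemma VS_le_B:
  assumes t: "0 \<le> t" and x: "x \<in> orthant"
  shows "VS t x \<le> norm x * B t"
proof (cases "x = 0")
  case True then show ?thesis using VS_zero[OF t] by simp
next
  case False
  then have c: "norm x > 0" by simp
  have "norm x *\<^sub>R onev - x \<in> orthant"
    unfolding orthant_def onev_def using component_le_norm_cart[of x] by (auto simp: abs_le_iff)
  then have "VS t x \<le> VS t (norm x *\<^sub>R onev)"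
    by (intro VS_mono[OF t orth_scale[OF onev_orth]]) auto
  also have "\<dots> = norm x * B t" unfolding B_def by (rule VS_scale[OF t onev_orth c])
  finally show ?thesis .
qed

lemma B_nonneg: "0 \<le> t \<Longrightarrow> 0 \<le> B t"
  unfolding B_def by (rule VS_nonneg[OF onev_orth])

lemma B_submult:
  assumes s: "0 \<le> s" and t: "0 \<le> t"
  shows "B (s + t) \<le> B s * B t"
  unfolding B_def
proof (rule V_least)
  fix z assume z: "z \<in> reachable Ms (s + t) onev"
  obtain w where w: "w \<in> reachable Ms s onev" "csum z \<le> VS t w"
    using VS_split[OF s t onev_orth z] by blast
  have wo: "w \<in> orthant" by (rule reach_orth[OF w(1) onev_orth s])
  have "VS t w \<le> norm w * B t" by (rule VS_le_B[OF t wo])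
  also have "\<dots> \<le> csum w * B t" using norm_le_csum[OF wo] B_nonneg[OF t] by (rule mult_right_mono)
  also have "\<dots> \<le> VS s onev * B t"
    using VS_upper[OF onev_orth s w(1)] B_nonneg[OF t] by (rule mult_right_mono)
  finally show "csum z \<le> VS s onev * VS t onev" using w(2) unfolding B_def by simp
qed

end

context irr begin

lemma B_pos:
  assumes t: "0 \<le> t" shows "0 < B t"
proof (cases "t = 0")
  case True
  then show ?thesis unfolding B_def by (simp add: VS_0 csum_onev)
next
  case False
  then have t': "0 < t" using t by simp
  obtain y where tr: "is_trajectory (\<lambda>_. m0) onev t y" using traj_exists[OF adm_const[OF m0]] by blast
  have "onev \<noteq> (0::real^'n)" unfolding onev_def by (simp add: vec_eq_iff)
  then have pos: "y t $ i > 0" for i by (rule full_support[OF tr onev_orth _ t' order_refl])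
  have "0 < csum (y t)" unfolding csum_def using pos by (intro sum_pos) auto
  also have "\<dots> \<le> B t" unfolding B_def using VS_upper[OF onev_orth t reachI[OF adm_const[OF m0] tr]] .
  finally show ?thesis .
qed

lemma harnack_const: "\<exists>\<delta>>0. \<forall>x\<in>orthant. \<exists>p\<in>reachable Ms 1 x. \<forall>i. \<delta> * csum x \<le> p $ i"
proof -
  have "\<forall>j. \<exists>y. is_trajectory (\<lambda>_. m0) (axis j 1) 1 y"
    using traj_exists[OF adm_const[OF m0]] by blast
  then obtain Y where Y: "\<And>j. is_trajectory (\<lambda>_. m0) (axis j 1) 1 (Y j)" by metis
  have axo: "axis j (1::real) \<in> orthant" for j :: 'n unfolding orthant_def axis_def by simp
  have ax0: "axis j (1::real) \<noteq> 0" for j :: 'n by (simp add: axis_eq_0_iff)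
  have Ypos: "Y j 1 $ i > 0" for i j
    by (rule full_support[OF Y axo ax0]) auto
  define d0 where "d0 = Min ((\<lambda>(i, j). Y j 1 $ i) ` UNIV)"
  have d0pos: "d0 > 0" unfolding d0_def using Ypos by (subst Min_gr_iff) auto
  have d0le: "d0 \<le> Y j 1 $ i" for i j unfolding d0_def by (rule Min_le) auto
  define N where "N = real CARD('n)"
  have N0: "N > 0" unfolding N_def by simp
  define \<delta> where "\<delta> = d0 / N"
  have \<delta>0: "\<delta> > 0" unfolding \<delta>_def using d0pos N0 by simp
  show ?thesis
  proof (intro exI conjI ballI)
    show "\<delta> > 0" by (rule \<delta>0)
    fix x :: "real^'n" assume x: "x \<in> orthant"
    define mx where "mx = Max (range (\<lambda>k. x $ k))"
    have "mx \<in> range (\<lambda>k. x $ k)" unfolding mx_def by (rule Max_in) auto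
    then obtain j where j: "x $ j = mx" by auto
    have xle: "x $ k \<le> x $ j" for k
    proof -
      have "x $ k \<le> mx" unfolding mx_def by (rule Max_ge) auto
      then show ?thesis using j by simp
    qed
    have xj0: "x $ j \<ge> 0" using x unfolding orthant_def by auto
    have "csum x \<le> (\<Sum>k\<in>(UNIV::'n set). x $ j)" unfolding csum_def by (rule sum_mono) (rule xle)
    then have cs: "csum x \<le> N * x $ j" unfolding N_def by simp
    define r where "r = x - x $ j *\<^sub>R axis j 1"
    have ro: "r \<in> orthant" unfolding r_def orthant_def using x unfolding orthant_def by (auto simp: axis_def)
    obtain ya where ya: "is_trajectory (\<lambda>_. m0) r 1 ya" using traj_exists[OF adm_const[OF m0]] by blast
    have tr: "is_trajectory (\<lambda>_. m0) (x $ j *\<^sub>R axis j 1 + r) 1 (\<lambda>s. x $ j *\<^sub>R Y j s + ya s)"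
      by (rule traj_add[OF traj_scale[OF Y] ya])
    then have tr': "is_trajectory (\<lambda>_. m0) x 1 (\<lambda>s. x $ j *\<^sub>R Y j s + ya s)" unfolding r_def by simp
    have p: "x $ j *\<^sub>R Y j 1 + ya 1 \<in> reachable Ms 1 x"
      using reachI[OF adm_const[OF m0] tr'] by simp
    have yao: "ya 1 \<in> orthant" using traj_pos[OF adm_const[OF m0] ya ro] by simp
    have "\<forall>i. \<delta> * csum x \<le> (x $ j *\<^sub>R Y j 1 + ya 1) $ i"
    proof
      fix i
      have "\<delta> * csum x \<le> \<delta> * (N * x $ j)" using cs \<delta>0 by (intro mult_left_mono) auto
      also have "\<dots> = d0 * x $ j" unfolding \<delta>_def using N0 by simp
      also have "\<dots> \<le> Y j 1 $ i * x $ j" using d0le xj0 by (intro mult_right_mono) auto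
      also have "\<dots> \<le> Y j 1 $ i * x $ j + ya 1 $ i" using yao unfolding orthant_def by auto
      finally show "\<delta> * csum x \<le> (x $ j *\<^sub>R Y j 1 + ya 1) $ i" by (simp add: mult.commute)
    qed
    then show "\<exists>p\<in>reachable Ms 1 x. \<forall>i. \<delta> * csum x \<le> p $ i" using p by blast
  qed
qed

definition dlt where "dlt = (SOME \<delta>. \<delta> > 0 \<and> (\<forall>x\<in>orthant. \<exists>p\<in>reachable Ms 1 x. \<forall>i. \<delta> * csum x \<le> p $ i))"

lemma dlt: "dlt > 0" "\<And>x. x \<in> orthant \<Longrightarrow> \<exists>p\<in>reachable Ms 1 x. \<forall>i. dlt * csum x \<le> p $ i"
  using someI_ex[OF harnack_const] unfolding dlt_def[symmetric] by blast+

lemma harnack: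
  assumes t: "0 \<le> t" and x: "x \<in> orthant"
  shows "dlt * csum x * B t \<le> VS (1 + t) x"
proof -
  obtain p where p: "p \<in> reachable Ms 1 x" "\<And>i. dlt * csum x \<le> p $ i" using dlt(2)[OF x] by blast
  have po: "p \<in> orthant" by (rule reach_orth[OF p(1) x]) simp
  define c where "c = dlt * csum x"
  have c0: "c \<ge> 0" unfolding c_def using dlt(1) csum_nonneg[OF x] by simp
  have "p - c *\<^sub>R onev \<in> orthant" using p(2) unfolding orthant_def onev_def c_def by auto
  then have "VS t (c *\<^sub>R onev) \<le> VS t p" by (rule VS_mono[OF t po])
  also have "\<dots> \<le> VS (1 + t) x" by (rule VS_glue[OF _ t x p(1)]) simp
  finally have A: "VS t (c *\<^sub>R onev) \<le> VS (1 + t) x" .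
  have "VS t (c *\<^sub>R onev) = c * B t"
  proof (cases "c = 0")
    case True then show ?thesis using VS_zero[OF t] by simp
  next
    case False then show ?thesis using VS_scale[OF t onev_orth] c0 unfolding B_def by simp
  qed
  then show ?thesis using A unfolding c_def by simp
qed

lemma B_supermult:
  assumes s: "0 \<le> s" and t: "0 \<le> t"
  shows "dlt * B s * B t \<le> B (s + (1 + t))"
proof -
  have Bt: "B t > 0" by (rule B_pos[OF t])
  have "B s \<le> B (s + (1 + t)) / (dlt * B t)"
    unfolding B_def[of s]
  proof (rule V_least)
    fix w assume w: "w \<in> reachable Ms s onev"
    have wo: "w \<in> orthant" by (rule reach_orth[OF w onev_orth s])
    have "dlt * csum w * B t \<le> VS (1 + t) w" by (rule harnack[OF t wo])
    also have "\<dots> \<le> VS (s + (1 + t)) onev" by (rule VS_glue[OF s _ onev_orth w]) (use t in simp)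
    finally have "csum w * (dlt * B t) \<le> B (s + (1 + t))" unfolding B_def by (simp add: mult_ac)
    then show "csum w \<le> B (s + (1 + t)) / (dlt * B t)" using dlt(1) Bt by (simp add: field_simps)
  qed
  then show ?thesis using dlt(1) Bt by (simp add: field_simps)
qed

end

lemma nat_floor_ex: "0 \<le> (t::real) \<Longrightarrow> \<exists>m::nat. real m \<le> t \<and> t < real m + 1"
proof -
  assume t: "0 \<le> t"
  have e: "real (nat \<lfloor>t\<rfloor>) = real_of_int \<lfloor>t\<rfloor>" using t by simp
  have "real_of_int \<lfloor>t\<rfloor> \<le> t" by (rule of_int_floor_le)
  moreover have "t < real_of_int \<lfloor>t\<rfloor> + 1" by (rule real_of_int_floor_add_one_gt)
  ultimately show ?thesis using e by (intro exI[of _ "nat \<lfloor>t\<rfloor>"]) simp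
qed

context irr begin

definition bb where "bb t = ln (B t)"

lemma bb_sub: "0 \<le> s \<Longrightarrow> 0 \<le> t \<Longrightarrow> bb (s + t) \<le> bb s + bb t"
proof -
  assume s: "0 \<le> s" and t: "0 \<le> t"
  have p: "0 < B s * B t" using B_pos[OF s] B_pos[OF t] by simp
  have "ln (B (s + t)) \<le> ln (B s * B t)"
    using B_submult[OF s t] p B_pos[of "s + t"] s t by simp
  then show ?thesis unfolding bb_def using B_pos[OF s] B_pos[OF t] by (simp add: ln_mult)
qed

lemma bb_sup: "0 \<le> s \<Longrightarrow> 0 \<le> t \<Longrightarrow> ln dlt + bb s + bb t \<le> bb (s + (1 + t))"
proof -
  assume s: "0 \<le> s" and t: "0 \<le> t"
  have p: "0 < dlt * B s * B t" using B_pos[OF s] B_pos[OF t] dlt(1) by simp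
  have "ln (dlt * B s * B t) \<le> ln (B (s + (1 + t)))"
    using B_supermult[OF s t] p B_pos[of "s + (1 + t)"] s t by simp
  then show ?thesis unfolding bb_def using B_pos[OF s] B_pos[OF t] dlt(1) by (simp add: ln_mult)
qed

lemma bb_0: "bb 0 \<ge> 0"
  unfolding bb_def B_def VS_0 csum_onev by simp

lemma bb_bounded01: "\<exists>C. \<forall>t\<in>{0..1}. \<bar>bb t\<bar> \<le> C"
proof -
  define U where "U = ln (real CARD('n) * norm (onev::real^'n) * exp R)"
  have up: "bb t \<le> U" if t: "t \<in> {0..1}" for t
  proof -
    have t0: "0 \<le> t" using t by simp
    have "B t \<le> real CARD('n) * norm (onev::real^'n) * exp R"
      unfolding B_def
    proof (rule V_least)
      fix z assume z: "z \<in> reachable Ms t onev"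
      have "csum z \<le> real CARD('n) * norm z" by (rule csum_le_norm)
      also have "\<dots> \<le> real CARD('n) * (norm (onev::real^'n) * exp (R * t))"
        using reach_norm[OF z t0] by (rule mult_left_mono) simp
      also have "\<dots> \<le> real CARD('n) * (norm (onev::real^'n) * exp R)"
        using t R by (intro mult_left_mono) (auto simp: mult_left_le)
      finally show "csum z \<le> real CARD('n) * norm (onev::real^'n) * exp R" by (simp add: mult_ac)
    qed
    then show ?thesis unfolding bb_def U_def using B_pos[OF t0] by simp
  qed
  have lo: "bb 1 - U \<le> bb t" if t: "t \<in> {0..1}" for t
  proof -
    have "bb (t + (1 - t)) \<le> bb t + bb (1 - t)" using t by (intro bb_sub) auto
    moreover have "bb (1 - t) \<le> U" using t by (intro up) auto
    ultimately show ?thesis by simp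
  qed
  have "\<bar>bb t\<bar> \<le> \<bar>U\<bar> + \<bar>bb 1\<bar>" if t: "t \<in> {0..1}" for t
    using up[OF t] lo[OF t] by linarith
  then show ?thesis by blast
qed

definition gg where "gg (m::nat) = ln dlt + bb (real m)"

lemma gg_super: "gg (j + k + 1) \<ge> gg j + gg k"
  unfolding gg_def using bb_sup[of "real j" "real k"] by (simp add: add_ac)

lemma gg_mult: "n \<ge> 1 \<Longrightarrow> gg (n * (m + 1) - 1) \<ge> real n * gg m"
proof (induction n rule: dec_induct)
  case base then show ?case by simp
next
  case (step n)
  have eq: "Suc n * (m + 1) - 1 = (n * (m + 1) - 1) + m + 1" using step by (cases n) auto
  have "real (Suc n) * gg m = real n * gg m + gg m" by (simp add: algebra_simps)
  also have "\<dots> \<le> gg (n * (m + 1) - 1) + gg m" using step by simp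
  also have "\<dots> \<le> gg (Suc n * (m + 1) - 1)" unfolding eq by (rule gg_super)
  finally show ?case .
qed

lemma bb_mult: "n \<ge> 1 \<Longrightarrow> 0 \<le> r \<Longrightarrow> bb (real n * r) \<le> real n * bb r"
proof (induction n rule: dec_induct)
  case base then show ?case by simp
next
  case (step n)
  have "bb (real (Suc n) * r) = bb (real n * r + r)" by (simp add: algebra_simps)
  also have "\<dots> \<le> bb (real n * r) + bb r" using step by (intro bb_sub) auto
  also have "\<dots> \<le> real n * bb r + bb r" using step by simp
  finally show ?case by (simp add: algebra_simps)
qed

lemma gg_le_bb: "gg m \<le> bb (real m + 1)"
proof -
  have "ln dlt + bb (real m) + bb 0 \<le> bb (real m + (1 + 0))" by (rule bb_sup) auto
  then show ?thesis unfolding gg_def using bb_0 by simp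
qed

lemma ratio_le: "k \<ge> 1 \<Longrightarrow> gg m / (real m + 1) \<le> bb (real k) / real k"
proof -
  assume k: "k \<ge> 1"
  have "real k * gg m \<le> gg (k * (m + 1) - 1)" by (rule gg_mult[OF k])
  also have "\<dots> \<le> bb (real (k * (m + 1) - 1) + 1)" by (rule gg_le_bb)
  also have "real (k * (m + 1) - 1) + 1 = real (m + 1) * real k" using k by (simp add: of_nat_diff algebra_simps)
  also have "bb (real (m + 1) * real k) \<le> real (m + 1) * bb (real k)" by (rule bb_mult) auto
  finally have "real k * gg m \<le> (real m + 1) * bb (real k)" by (simp add: add.commute)
  then show ?thesis using k by (simp add: field_simps)
qed

definition Lam where "Lam = Sup (range (\<lambda>m. gg m / (real m + 1)))"

lemma Lam_upper: "gg m \<le> Lam * (real m + 1)"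
proof -
  have "gg m / (real m + 1) \<le> Lam"
    unfolding Lam_def by (rule cSup_upper) (auto intro!: bdd_aboveI2 ratio_le[of 1])
  then show ?thesis by (simp add: field_simps)
qed

lemma Lam_lower: "k \<ge> 1 \<Longrightarrow> Lam * real k \<le> bb (real k)"
proof -
  assume k: "k \<ge> 1"
  have "Lam \<le> bb (real k) / real k"
    unfolding Lam_def by (rule cSup_least) (auto intro: ratio_le[OF k])
  then show ?thesis using k by (simp add: field_simps)
qed

lemma bb_bounds: "\<exists>K. \<forall>t\<ge>0. \<bar>bb t - Lam * t\<bar> \<le> K"
proof -
  obtain C where C: "\<And>t. t \<in> {0..1} \<Longrightarrow> \<bar>bb t\<bar> \<le> C" using bb_bounded01 by blast
  define K where "K = \<bar>Lam\<bar> + \<bar>ln dlt\<bar> + C"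
  have "\<bar>bb t - Lam * t\<bar> \<le> K" if t: "t \<ge> 0" for t
  proof -
    obtain m :: nat where m: "real m \<le> t" "t < real m + 1" using nat_floor_ex[OF t] by blast
    have lam1: "Lam * (real m + 1) \<le> Lam * t + \<bar>Lam\<bar>"
    proof -
      have "Lam * (real m + 1) - Lam * t = Lam * (real m + 1 - t)" by (simp add: algebra_simps)
      also have "\<dots> \<le> \<bar>Lam\<bar> * (real m + 1 - t)" using m by (intro mult_right_mono) auto
      also have "\<dots> \<le> \<bar>Lam\<bar> * 1" using m by (intro mult_left_mono) auto
      finally show ?thesis by simp
    qed
    have lam2: "Lam * t - \<bar>Lam\<bar> \<le> Lam * (real m + 1)"
    proof -
      have "Lam * t - Lam * (real m + 1) = Lam * (t - (real m + 1))" by (simp add: algebra_simps)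
      also have "\<dots> \<le> \<bar>Lam\<bar> * (real m + 1 - t)"
      proof -
        have "Lam * (t - (real m + 1)) = (- Lam) * (real m + 1 - t)" by (simp add: algebra_simps)
        also have "\<dots> \<le> \<bar>Lam\<bar> * (real m + 1 - t)" using m by (intro mult_right_mono) auto
        finally show ?thesis .
      qed
      also have "\<dots> \<le> \<bar>Lam\<bar> * 1" using m by (intro mult_left_mono) auto
      finally show ?thesis by simp
    qed
    have upper: "bb t \<le> Lam * t + K"
    proof -
      have "bb (real m + (t - real m)) \<le> bb (real m) + bb (t - real m)" using m by (intro bb_sub) auto
      moreover have "\<bar>bb (t - real m)\<bar> \<le> C" using m by (intro C) auto
      ultimately have "bb t \<le> bb (real m) + C" by simp
      also have "bb (real m) = gg m - ln dlt" unfolding gg_def by simp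
      also have "gg m \<le> Lam * (real m + 1)" by (rule Lam_upper)
      finally show ?thesis using lam1 unfolding K_def by linarith
    qed
    have lower: "Lam * t - K \<le> bb t"
    proof -
      have "bb (t + (real m + 1 - t)) \<le> bb t + bb (real m + 1 - t)" using m t by (intro bb_sub) auto
      moreover have "\<bar>bb (real m + 1 - t)\<bar> \<le> C" using m by (intro C) auto
      moreover have "t + (real m + 1 - t) = real (Suc m)" by simp
      ultimately have "bb (real (Suc m)) \<le> bb t + C" by (simp add: abs_le_iff)
      moreover have "Lam * real (Suc m) \<le> bb (real (Suc m))" by (rule Lam_lower) simp
      moreover have "real (Suc m) = real m + 1" by simp
      ultimately show ?thesis using lam2 unfolding K_def by (smt (verit))
    qed
    show ?thesis using upper lower by (simp add: abs_le_iff)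
  qed
  then show ?thesis by blast
qed

definition KK where "KK = (SOME K. \<forall>t\<ge>0. \<bar>bb t - Lam * t\<bar> \<le> K)"

lemma B_bounds:
  assumes t: "0 \<le> t"
  shows "exp (Lam * t - KK) \<le> B t" "B t \<le> exp (Lam * t + KK)"
proof -
  have K: "\<bar>bb t - Lam * t\<bar> \<le> KK" using someI_ex[OF bb_bounds] t unfolding KK_def[symmetric] by blast
  have "B t = exp (bb t)" unfolding bb_def using B_pos[OF t] by simp
  then show "exp (Lam * t - KK) \<le> B t" "B t \<le> exp (Lam * t + KK)" using K by (simp_all add: abs_le_iff)
qed

end

lemma closed_orthant: "closed (orthant :: (real^'n) set)"
proof -
  have "orthant = {x::real^'n. \<forall>i. 0 \<le> x $ i}" unfolding orthant_def by simp
  moreover have "closed {x::real^'n. \<forall>i. 0 \<le> x $ i}"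
    by (intro closed_Collect_all closed_Collect_le continuous_intros)
  ultimately show ?thesis by simp
qed

lemma orth_diff_le: "(y + norm (x - y) *\<^sub>R onev) - x \<in> orthant" for x y :: "real^'n"
proof -
  have "x $ i - y $ i \<le> norm (x - y)" for i
    using component_le_norm_cart[of "x - y" i] by simp
  then show ?thesis unfolding orthant_def onev_def by (simp add: algebra_simps)
qed

context irr begin

definition LL where "LL = exp KK"
definition cl where "cl = dlt * exp (- Lam - KK)"
definition phi where "phi t x = exp (- (Lam * t)) * VS t x"

lemma LL_pos: "LL > 0" unfolding LL_def by simp
lemma cl_pos: "cl > 0" unfolding cl_def using dlt(1) by simp

lemma phi_le: "0 \<le> t \<Longrightarrow> x \<in> orthant \<Longrightarrow> phi t x \<le> LL * norm x"
proof -
  assume t: "0 \<le> t" and x: "x \<in> orthant"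
  have "VS t x \<le> norm x * B t" by (rule VS_le_B[OF t x])
  also have "\<dots> \<le> norm x * exp (Lam * t + KK)" using B_bounds(2)[OF t] by (rule mult_left_mono) simp
  finally have "exp (- (Lam * t)) * VS t x \<le> exp (- (Lam * t)) * (norm x * exp (Lam * t + KK))"
    by (rule mult_left_mono) simp
  also have "\<dots> = LL * norm x" unfolding LL_def by (simp add: exp_add[symmetric] mult_ac)
  finally show ?thesis unfolding phi_def .
qed

lemma phi_nonneg: "0 \<le> t \<Longrightarrow> x \<in> orthant \<Longrightarrow> 0 \<le> phi t x"
  unfolding phi_def using VS_nonneg by simp

lemma phi_ge: "1 \<le> t \<Longrightarrow> x \<in> orthant \<Longrightarrow> cl * csum x \<le> phi t x"
proof -
  assume t: "1 \<le> t" and x: "x \<in> orthant"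
  have t1: "0 \<le> t - 1" using t by simp
  have "dlt * csum x * exp (Lam * (t - 1) - KK) \<le> dlt * csum x * B (t - 1)"
    using B_bounds(1)[OF t1] dlt(1) csum_nonneg[OF x] by (intro mult_left_mono) auto
  also have "\<dots> \<le> VS (1 + (t - 1)) x" by (rule harnack[OF t1 x])
  finally have "dlt * csum x * exp (Lam * (t - 1) - KK) \<le> VS t x" by simp
  then have "exp (- (Lam * t)) * (dlt * csum x * exp (Lam * (t - 1) - KK)) \<le> exp (- (Lam * t)) * VS t x"
    by (rule mult_left_mono) simp
  moreover have "exp (- (Lam * t)) * (dlt * csum x * exp (Lam * (t - 1) - KK)) = cl * csum x"
    unfolding cl_def by (simp add: mult_ac exp_add[symmetric] algebra_simps)
  ultimately show ?thesis unfolding phi_def by simp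
qed

lemma phi_lip:
  assumes t: "0 \<le> t" and x: "x \<in> orthant" and y: "y \<in> orthant"
  shows "phi t x \<le> phi t y + LL * norm (x - y)"
proof -
  define d where "d = norm (x - y)"
  have do: "d *\<^sub>R onev \<in> orthant" unfolding d_def by (intro orth_scale onev_orth) simp
  have yd: "y + d *\<^sub>R onev \<in> orthant" by (rule orth_add[OF y do])
  have "VS t x \<le> VS t (y + d *\<^sub>R onev)"
    by (rule VS_mono[OF t yd]) (use orth_diff_le[of y x] in \<open>simp add: d_def\<close>)
  also have "\<dots> \<le> VS t y + VS t (d *\<^sub>R onev)" by (rule VS_subadd[OF t y do])
  also have "VS t (d *\<^sub>R onev) = d * B t"
  proof (cases "d = 0")
    case True then show ?thesis using VS_zero[OF t] by simp
  next
    case False then have "d > 0" unfolding d_def by simp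
    then show ?thesis unfolding B_def by (rule VS_scale[OF t onev_orth])
  qed
  also have "d * B t \<le> d * exp (Lam * t + KK)"
    using B_bounds(2)[OF t] unfolding d_def by (rule mult_left_mono) simp
  finally have "VS t x \<le> VS t y + d * exp (Lam * t + KK)" by simp
  then have "exp (- (Lam * t)) * VS t x \<le> exp (- (Lam * t)) * (VS t y + d * exp (Lam * t + KK))"
    by (rule mult_left_mono) simp
  also have "\<dots> = exp (- (Lam * t)) * VS t y + LL * d"
    unfolding LL_def by (simp add: algebra_simps exp_add[symmetric])
  finally show ?thesis unfolding phi_def d_def .
qed

lemma phi_scale: "0 \<le> t \<Longrightarrow> x \<in> orthant \<Longrightarrow> c > 0 \<Longrightarrow> phi t (c *\<^sub>R x) = c * phi t x"
  unfolding phi_def using VS_scale by simp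

lemma phi_glue:
  assumes s: "0 \<le> s" and t: "0 \<le> t" and x: "x \<in> orthant" and z: "z \<in> reachable Ms s x"
  shows "phi t z \<le> exp (Lam * s) * phi (s + t) x"
proof -
  have "VS t z \<le> VS (s + t) x" by (rule VS_glue[OF s t x z])
  then have "exp (- (Lam * t)) * VS t z \<le> exp (- (Lam * t)) * VS (s + t) x" by (rule mult_left_mono) simp
  also have "\<dots> = exp (Lam * s) * (exp (- (Lam * (s + t))) * VS (s + t) x)"
    by (simp add: exp_add[symmetric] algebra_simps)
  finally show ?thesis unfolding phi_def .
qed

definition gT where "gT T x = Sup ((\<lambda>t. phi t x) ` {T..})"

lemma gT_bdd: "0 \<le> T \<Longrightarrow> x \<in> orthant \<Longrightarrow> bdd_above ((\<lambda>t. phi t x) ` {T..})"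
  by (rule bdd_aboveI2[of _ _ "LL * norm x"]) (auto intro: phi_le)

lemma gT_ge: "0 \<le> T \<Longrightarrow> T \<le> t \<Longrightarrow> x \<in> orthant \<Longrightarrow> phi t x \<le> gT T x"
  unfolding gT_def by (rule cSup_upper[OF _ gT_bdd]) auto

lemma gT_least: "(\<And>t. T \<le> t \<Longrightarrow> phi t x \<le> b) \<Longrightarrow> gT T x \<le> b"
  unfolding gT_def by (rule cSup_least) auto

lemma gT_upper: "0 \<le> T \<Longrightarrow> x \<in> orthant \<Longrightarrow> gT T x \<le> LL * norm x"
  by (rule gT_least) (auto intro: phi_le)

lemma gT_lower: "1 \<le> T \<Longrightarrow> x \<in> orthant \<Longrightarrow> cl * csum x \<le> gT T x"
  using phi_ge[of T x] gT_ge[of T T x] by simp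

lemma gT_mono: "0 \<le> T \<Longrightarrow> T \<le> T' \<Longrightarrow> x \<in> orthant \<Longrightarrow> gT T' x \<le> gT T x"
  by (rule gT_least) (auto intro: gT_ge)

lemma gT_lip:
  assumes T: "0 \<le> T" and x: "x \<in> orthant" and y: "y \<in> orthant"
  shows "gT T x \<le> gT T y + LL * norm (x - y)"
proof -
  have "gT T x - LL * norm (x - y) \<le> gT T y"
  proof -
    have "gT T x \<le> gT T y + LL * norm (x - y)"
    proof (rule gT_least)
      fix t assume t: "T \<le> t"
      have "phi t x \<le> phi t y + LL * norm (x - y)" using phi_lip[of t x y] T t x y by simp
      also have "phi t y \<le> gT T y" by (rule gT_ge[OF T t y])
      finally show "phi t x \<le> gT T y + LL * norm (x - y)" by simp
    qed
    then show ?thesis by simp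
  qed
  then show ?thesis by simp
qed

lemma gT_scale:
  assumes T: "0 \<le> T" and x: "x \<in> orthant" and c: "c > 0"
  shows "gT T (c *\<^sub>R x) = c * gT T x"
proof (rule antisym)
  have cx: "c *\<^sub>R x \<in> orthant" using orth_scale[OF x] c by simp
  show "gT T (c *\<^sub>R x) \<le> c * gT T x"
  proof (rule gT_least)
    fix t assume t: "T \<le> t"
    have "phi t (c *\<^sub>R x) = c * phi t x" using phi_scale[of t x c] T t x c by simp
    also have "\<dots> \<le> c * gT T x" using gT_ge[OF T t x] c by simp
    finally show "phi t (c *\<^sub>R x) \<le> c * gT T x" .
  qed
  have "gT T x \<le> gT T (c *\<^sub>R x) / c"
  proof (rule gT_least)
    fix t assume t: "T \<le> t"
    have "c * phi t x = phi t (c *\<^sub>R x)" using phi_scale[of t x c] T t x c by simp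
    also have "\<dots> \<le> gT T (c *\<^sub>R x)" by (rule gT_ge[OF T t cx])
    finally show "phi t x \<le> gT T (c *\<^sub>R x) / c" using c by (simp add: field_simps)
  qed
  then show "c * gT T x \<le> gT T (c *\<^sub>R x)" using c by (simp add: field_simps)
qed

definition vbar where "vbar x = Inf ((\<lambda>T. gT T x) ` {1..})"

lemma vbar_bdd: "x \<in> orthant \<Longrightarrow> bdd_below ((\<lambda>T. gT T x) ` {1..})"
  by (rule bdd_belowI2[where m="cl * csum x"]) (auto intro: gT_lower)

lemma vbar_le: "1 \<le> T \<Longrightarrow> x \<in> orthant \<Longrightarrow> vbar x \<le> gT T x"
  unfolding vbar_def by (rule cInf_lower[OF _ vbar_bdd]) auto

lemma vbar_greatest: "(\<And>T. 1 \<le> T \<Longrightarrow> b \<le> gT T x) \<Longrightarrow> b \<le> vbar x"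
  unfolding vbar_def by (rule cInf_greatest) auto

lemma vbar_upper: "x \<in> orthant \<Longrightarrow> vbar x \<le> LL * norm x"
  using vbar_le[of 1 x] gT_upper[of 1 x] by simp

lemma vbar_lower: "x \<in> orthant \<Longrightarrow> cl * csum x \<le> vbar x"
  by (rule vbar_greatest) (rule gT_lower)

lemma vbar_lip:
  assumes x: "x \<in> orthant" and y: "y \<in> orthant"
  shows "vbar x \<le> vbar y + LL * norm (x - y)"
proof -
  have "vbar x - LL * norm (x - y) \<le> vbar y"
  proof (rule vbar_greatest)
    fix T :: real assume T: "1 \<le> T"
    have "vbar x \<le> gT T x" by (rule vbar_le[OF T x])
    also have "\<dots> \<le> gT T y + LL * norm (x - y)" using gT_lip[of T x y] T x y by simp
    finally show "vbar x - LL * norm (x - y) \<le> gT T y" by simp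
  qed
  then show ?thesis by simp
qed

lemma vbar_scale:
  assumes x: "x \<in> orthant" and c: "c > 0"
  shows "vbar (c *\<^sub>R x) = c * vbar x"
proof (rule antisym)
  have cx: "c *\<^sub>R x \<in> orthant" using orth_scale[OF x] c by simp
  have "vbar (c *\<^sub>R x) / c \<le> vbar x"
  proof (rule vbar_greatest)
    fix T :: real assume T: "1 \<le> T"
    have "vbar (c *\<^sub>R x) \<le> gT T (c *\<^sub>R x)" by (rule vbar_le[OF T cx])
    also have "\<dots> = c * gT T x" using gT_scale[of T x c] T x c by simp
    finally show "vbar (c *\<^sub>R x) / c \<le> gT T x" using c by (simp add: field_simps)
  qed
  then show "vbar (c *\<^sub>R x) \<le> c * vbar x" using c by (simp add: field_simps)
  have "c * vbar x \<le> vbar (c *\<^sub>R x)"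
  proof (rule vbar_greatest)
    fix T :: real assume T: "1 \<le> T"
    have "c * vbar x \<le> c * gT T x" using vbar_le[OF T x] c by simp
    also have "\<dots> = gT T (c *\<^sub>R x)" using gT_scale[of T x c] T x c by simp
    finally show "c * vbar x \<le> gT T (c *\<^sub>R x)" .
  qed
  then show "c * vbar x \<le> vbar (c *\<^sub>R x)" .
qed

lemma vbar_approx:
  assumes x: "x \<in> orthant" and e: "e > 0"
  shows "\<exists>T\<ge>1. gT T x < vbar x + e"
proof -
  have "Inf ((\<lambda>T. gT T x) ` {1..}) < vbar x + e" unfolding vbar_def using e by simp
  then obtain g where "g \<in> (\<lambda>T. gT T x) ` {1..}" "g < vbar x + e"
    using cInf_less_iff[OF _ vbar_bdd[OF x]] by auto
  then show ?thesis by auto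
qed

end

context irr begin

lemma unif_approx:
  assumes e: "e > 0" and rho: "0 \<le> rho"
  shows "\<exists>T\<ge>1. \<forall>z\<in>orthant. norm z \<le> rho \<longrightarrow> gT T z \<le> vbar z + e"
proof -
  define K where "K = cball (0::real^'n) rho \<inter> orthant"
  have cK: "compact K" unfolding K_def by (intro compact_Int_closed compact_cball closed_orthant)
  define eta where "eta = e / (3 * (LL + 1))"
  have eta: "eta > 0" unfolding eta_def using e LL_pos by simp
  have LLeta: "LL * eta \<le> e / 3"
  proof -
    have "LL * eta = e / 3 * (LL / (LL + 1))" unfolding eta_def using LL_pos by (simp add: field_simps)
    also have "\<dots> \<le> e / 3 * 1" using e LL_pos by (intro mult_left_mono) auto
    finally show ?thesis by simp
  qed
  obtain F where F: "F \<subseteq> K" "finite F" "K \<subseteq> (\<Union>c\<in>F. ball c eta)"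
    using compactE_image[OF cK, of K "\<lambda>c. ball c eta"] eta by force
  have "\<forall>c\<in>F. \<exists>T\<ge>1. gT T c < vbar c + e / 3"
    using F(1) e unfolding K_def by (auto intro!: vbar_approx)
  then obtain Tc where Tc: "\<And>c. c \<in> F \<Longrightarrow> Tc c \<ge> 1 \<and> gT (Tc c) c < vbar c + e / 3" by metis
  define T where "T = Max (insert 1 (Tc ` F))"
  have T1: "T \<ge> 1" unfolding T_def using F(2) by simp
  have TTc: "Tc c \<le> T" if "c \<in> F" for c unfolding T_def using F(2) that by simp
  show ?thesis
  proof (intro exI conjI ballI impI)
    show "1 \<le> T" by (rule T1)
    fix z :: "real^'n" assume z: "z \<in> orthant" "norm z \<le> rho"
    then have "z \<in> K" unfolding K_def by simp
    then obtain c where c: "c \<in> F" "z \<in> ball c eta" using F(3) by blast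
    have co: "c \<in> orthant" using c F(1) unfolding K_def by auto
    have dz: "norm (z - c) < eta" "norm (c - z) < eta" using c(2) by (auto simp: dist_norm norm_minus_commute)
    have "gT T z \<le> gT T c + LL * norm (z - c)" using gT_lip[of T z c] T1 z co by simp
    also have "gT T c \<le> gT (Tc c) c" using gT_mono[of "Tc c" T c] Tc[OF c(1)] TTc[OF c(1)] co by simp
    also have "gT (Tc c) c \<le> vbar c + e / 3" using Tc[OF c(1)] by simp
    also have "vbar c \<le> vbar z + LL * norm (c - z)" by (rule vbar_lip[OF co z(1)])
    finally have "gT T z \<le> vbar z + e / 3 + LL * norm (z - c) + LL * norm (c - z)" by simp
    moreover have "LL * norm (z - c) \<le> LL * eta" "LL * norm (c - z) \<le> LL * eta"
      using dz LL_pos by (auto intro: mult_left_mono)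
    ultimately show "gT T z \<le> vbar z + e" using LLeta by linarith
  qed
qed

lemma vbar_bdd_reach: "x \<in> orthant \<Longrightarrow> 0 \<le> s \<Longrightarrow> bdd_above (vbar ` reachable Ms s x)"
  by (rule bdd_reach[where C = LL]) (auto intro: vbar_upper less_imp_le[OF LL_pos])

lemma eigen_le:
  assumes s: "0 \<le> s" and x: "x \<in> orthant"
  shows "value_fun vbar Ms s x \<le> exp (Lam * s) * vbar x"
proof (rule V_least)
  fix z assume z: "z \<in> reachable Ms s x"
  have zo: "z \<in> orthant" by (rule reach_orth[OF z x s])
  have "vbar z / exp (Lam * s) \<le> vbar x"
  proof (rule vbar_greatest)
    fix T :: real assume T: "1 \<le> T"
    have "gT T z \<le> exp (Lam * s) * gT (T + s) x"
    proof (rule gT_least)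
      fix t assume t: "T \<le> t"
      have "phi t z \<le> exp (Lam * s) * phi (s + t) x" by (rule phi_glue[OF s _ x z]) (use T t in simp)
      also have "phi (s + t) x \<le> gT (T + s) x" by (rule gT_ge) (use T t s x in auto)
      finally show "phi t z \<le> exp (Lam * s) * gT (T + s) x" by simp
    qed
    also have "gT (T + s) x \<le> gT T x" by (rule gT_mono) (use T s x in auto)
    finally have "vbar z \<le> exp (Lam * s) * gT T x"
      using vbar_le[OF T zo] by (smt (verit) exp_gt_zero mult_left_mono)
    then show "vbar z / exp (Lam * s) \<le> gT T x" by (simp add: field_simps)
  qed
  then show "vbar z \<le> exp (Lam * s) * vbar x" by (simp add: field_simps)
qed

lemma eigen_ge:
  assumes s: "0 \<le> s" and x: "x \<in> orthant"
  shows "exp (Lam * s) * vbar x \<le> value_fun vbar Ms s x"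
proof (rule field_le_epsilon)
  fix e :: real assume e: "0 < e"
  define V where "V = value_fun vbar Ms s x"
  define rho where "rho = norm x * exp (R * s)"
  have rho: "0 \<le> rho" unfolding rho_def by simp
  obtain T where T: "T \<ge> 1" "\<And>z. z \<in> orthant \<Longrightarrow> norm z \<le> rho \<Longrightarrow> gT T z \<le> vbar z + e"
    using unif_approx[OF e rho] by blast
  have Vub: "vbar z \<le> V" if "z \<in> reachable Ms s x" for z
    unfolding V_def by (rule V_upper[OF vbar_bdd_reach[OF x s] that])
  have "gT (T + s) x \<le> exp (- (Lam * s)) * (V + e)"
  proof (rule gT_least)
    fix t' assume t': "T + s \<le> t'"
    define t where "t = t' - s"
    have t0: "0 \<le> t" "T \<le> t" unfolding t_def using t' T by auto
    have "VS (s + t) x \<le> exp (Lam * t) * (V + e)"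
    proof (rule V_least)
      fix w assume w: "w \<in> reachable Ms (s + t) x"
      obtain z where z: "z \<in> reachable Ms s x" "csum w \<le> VS t z"
        using VS_split[OF s t0(1) x w] by blast
      have zo: "z \<in> orthant" by (rule reach_orth[OF z(1) x s])
      have zn: "norm z \<le> rho" unfolding rho_def by (rule reach_norm[OF z(1) s])
      have "exp (- (Lam * t)) * csum w \<le> phi t z" unfolding phi_def using z(2) by (rule mult_left_mono) simp
      also have "\<dots> \<le> gT T z" by (rule gT_ge[OF _ t0(2) zo]) (use T in simp)
      also have "\<dots> \<le> vbar z + e" by (rule T(2)[OF zo zn])
      also have "\<dots> \<le> V + e" using Vub[OF z(1)] by simp
      finally have "exp (- (Lam * t)) * csum w \<le> V + e" .
      then show "csum w \<le> exp (Lam * t) * (V + e)" by (simp add: exp_minus field_simps)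
    qed
    then have "exp (- (Lam * (s + t))) * VS (s + t) x \<le> exp (- (Lam * (s + t))) * (exp (Lam * t) * (V + e))"
      by (rule mult_left_mono) simp
    also have "\<dots> = exp (- (Lam * s)) * (V + e)" by (simp add: exp_add[symmetric] algebra_simps)
    finally show "phi t' x \<le> exp (- (Lam * s)) * (V + e)" unfolding phi_def t_def by simp
  qed
  moreover have "vbar x \<le> gT (T + s) x" by (rule vbar_le[OF _ x]) (use T s in simp)
  ultimately have "vbar x \<le> exp (- (Lam * s)) * (V + e)" by simp
  then show "exp (Lam * s) * vbar x \<le> V + e" by (simp add: exp_minus field_simps)
qed

lemma eigen: "0 \<le> s \<Longrightarrow> x \<in> orthant \<Longrightarrow> exp (Lam * s) * vbar x = value_fun vbar Ms s x"
  using eigen_le eigen_ge by (simp add: order_antisym)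

lemma vbar_witness:
  "homogeneous1 vbar \<and> pos_on_cone vbar \<and> (\<exists>L. L-lipschitz_on orthant vbar) \<and>
   (\<forall>t\<ge>0. \<forall>x\<in>orthant. exp (Lam * t) * vbar x = value_fun vbar Ms t x)"
proof (intro conjI allI ballI impI exI)
  show "homogeneous1 vbar" unfolding homogeneous1_def using vbar_scale by blast
  show "pos_on_cone vbar" unfolding pos_on_cone_def
  proof (intro conjI ballI)
    fix x :: "real^'n" assume x: "x \<in> orthant"
    show "0 \<le> vbar x" using vbar_lower[OF x] cl_pos csum_nonneg[OF x] by (smt (verit) mult_nonneg_nonneg)
  next
    fix x :: "real^'n" assume x: "x \<in> orthant0"
    then have xo: "x \<in> orthant" unfolding orthant0_def by simp
    show "0 < vbar x" using vbar_lower[OF xo] cl_pos csum_pos[OF x] by (smt (verit) mult_pos_pos)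
  qed
  show "LL-lipschitz_on orthant vbar"
  proof (rule lipschitz_onI)
    fix x y :: "real^'n" assume x: "x \<in> orthant" and y: "y \<in> orthant"
    have "vbar x \<le> vbar y + LL * norm (x - y)" by (rule vbar_lip[OF x y])
    moreover have "vbar y \<le> vbar x + LL * norm (y - x)" by (rule vbar_lip[OF y x])
    ultimately show "dist (vbar x) (vbar y) \<le> LL * dist x y"
      by (simp add: dist_norm norm_minus_commute abs_le_iff)
  next
    show "0 \<le> LL" using LL_pos by simp
  qed
  fix t :: real and x :: "real^'n" assume "0 \<le> t" "x \<in> orthant"
  then show "exp (Lam * t) * vbar x = value_fun vbar Ms t x" by (rule eigen)
qed

end

lemma compare_csum:
  fixes w :: "real^'n \<Rightarrow> real"
  assumes cont: "continuous_on orthant w" and hom: "homogeneous1 w" and pos: "pos_on_cone w"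
  shows "\<exists>c C. 0 < c \<and> (\<forall>x\<in>orthant. c * csum x \<le> w x \<and> w x \<le> C * csum x)"
proof -
  define D :: "(real^'n) set" where "D = {x \<in> orthant. csum x = 1}"
  have Dsub: "D \<subseteq> orthant" unfolding D_def by auto
  have cD: "compact D"
    unfolding compact_eq_bounded_closed
  proof
    show "bounded D" unfolding bounded_iff D_def using norm_le_csum by fastforce
    have "D = orthant \<inter> csum -` {1}" unfolding D_def by auto
    moreover have "continuous_on UNIV csum" unfolding csum_def by (intro continuous_intros)
    ultimately show "closed D"
      using closed_orthant by (metis closed_Int closed_vimage closed_singleton continuous_on_closed_vimage[of UNIV] closed_UNIV UNIV_I)
  qed
  have ax: "axis i (1::real) \<in> D" for i :: 'n
    unfolding D_def orthant_def csum_def axis_def by (simp add: sum.delta)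
  then have Dne: "D \<noteq> {}" by blast
  have cw: "continuous_on D w" by (rule continuous_on_subset[OF cont Dsub])
  obtain a where a: "a \<in> D" "\<And>y. y \<in> D \<Longrightarrow> w a \<le> w y" using continuous_attains_inf[OF cD Dne cw] by blast
  obtain b where b: "b \<in> D" "\<And>y. y \<in> D \<Longrightarrow> w y \<le> w b" using continuous_attains_sup[OF cD Dne cw] by blast
  have a0: "a \<in> orthant0" using a(1) unfolding D_def orthant0_def csum_def by auto
  have wa: "0 < w a" using pos a0 unfolding pos_on_cone_def by blast
  have w0: "w 0 = 0"
  proof -
    have h: "\<forall>x\<in>orthant. \<forall>c::real. c > 0 \<longrightarrow> w (c *\<^sub>R x) = c * w x"
      using hom unfolding homogeneous1_def by blast
    have "(0::real^'n) \<in> orthant" by (simp add: orthant_def)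
    then have e: "w ((2::real) *\<^sub>R 0) = 2 * w 0" by (intro h[rule_format]) auto
    then have "w 0 = 2 * w 0" by simp
    then show ?thesis by linarith
  qed
  show ?thesis
  proof (intro exI conjI)
    show "0 < w a" by (rule wa)
    show "\<forall>x\<in>orthant. w a * csum x \<le> w x \<and> w x \<le> w b * csum x"
    proof
    fix x :: "real^'n" assume x: "x \<in> orthant"
    show "w a * csum x \<le> w x \<and> w x \<le> w b * csum x"
    proof (cases "x = 0")
      case True then show ?thesis using w0 by (simp add: csum_def)
    next
      case False
      then have x0: "x \<in> orthant0" using x unfolding orthant0_def by simp
      define s where "s = csum x"
      have s: "s > 0" unfolding s_def by (rule csum_pos[OF x0])
      have xs: "(1 / s) *\<^sub>R x \<in> D" unfolding D_def using x s by (auto simp: csum_scale s_def intro: orth_scale)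
      have "w x = w (s *\<^sub>R ((1 / s) *\<^sub>R x))" using s by simp
      also have "\<dots> = s * w ((1 / s) *\<^sub>R x)" using hom xs s unfolding homogeneous1_def D_def by blast
      finally have wx: "w x = s * w ((1 / s) *\<^sub>R x)" .
      show ?thesis using a(2)[OF xs] b(2)[OF xs] s unfolding wx s_def[symmetric]
        by (simp add: mult.commute)
    qed
    qed
  qed
qed

context irr begin

lemma V_compare:
  assumes t: "0 \<le> t" and x: "x \<in> orthant" and c: "0 < c"
    and w: "\<And>z. z \<in> orthant \<Longrightarrow> c * csum z \<le> w z \<and> w z \<le> C * csum z"
  shows "c * VS t x \<le> value_fun w Ms t x" "value_fun w Ms t x \<le> C * VS t x"
proof -
  have C0: "C \<ge> 0"
  proof -
    have "c * csum (onev::real^'n) \<le> C * csum (onev::real^'n)" using w[OF onev_orth] by linarith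
    then have "c \<le> C" using csum_onev[where 'n='n] by simp
    then show ?thesis using c by simp
  qed
  have bdd: "bdd_above (w ` reachable Ms t x)"
  proof (rule bdd_reach[OF _ x t, where C = "C * real CARD('n)"])
    fix z :: "real^'n" assume z: "z \<in> orthant"
    have "w z \<le> C * csum z" using w[OF z] by simp
    also have "\<dots> \<le> C * (real CARD('n) * norm z)" using csum_le_norm C0 by (rule mult_left_mono)
    finally show "w z \<le> C * real CARD('n) * norm z" by (simp add: mult_ac)
  qed (use C0 in simp)
  show "value_fun w Ms t x \<le> C * VS t x"
  proof (rule V_least)
    fix z assume z: "z \<in> reachable Ms t x"
    have zo: "z \<in> orthant" by (rule reach_orth[OF z x t])
    have "w z \<le> C * csum z" using w[OF zo] by simp
    also have "\<dots> \<le> C * VS t x" using VS_upper[OF x t z] C0 by (rule mult_left_mono)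
    finally show "w z \<le> C * VS t x" .
  qed
  have "VS t x \<le> value_fun w Ms t x / c"
  proof (rule V_least)
    fix z assume z: "z \<in> reachable Ms t x"
    have zo: "z \<in> orthant" by (rule reach_orth[OF z x t])
    have "c * csum z \<le> w z" using w[OF zo] by simp
    also have "\<dots> \<le> value_fun w Ms t x" by (rule V_upper[OF bdd z])
    finally show "csum z \<le> value_fun w Ms t x / c" using c by (simp add: field_simps)
  qed
  then show "c * VS t x \<le> value_fun w Ms t x" using c by (simp add: field_simps)
qed

lemma exp_bounded_imp:
  fixes d :: real
  assumes "\<And>t. 0 \<le> t \<Longrightarrow> exp (d * t) \<le> A"
  shows "d \<le> 0"
proof (rule ccontr)
  assume "\<not> d \<le> 0"
  then have d: "d > 0" by simp
  define t where "t = \<bar>A\<bar> / d"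
  have t0: "0 \<le> t" unfolding t_def using d by simp
  have e1: "1 + d * t \<le> exp (d * t)" by (rule exp_ge_add_one_self)
  have e2: "d * t = \<bar>A\<bar>" unfolding t_def using d by simp
  have e3: "exp (d * t) \<le> A" by (rule assms[OF t0])
  have "A \<le> \<bar>A\<bar>" by simp
  then show False using e1 e2 e3 by linarith
qed

lemma lambda_unique:
  assumes hom: "homogeneous1 w" and pos: "pos_on_cone w" and lip: "L-lipschitz_on orthant w"
    and eq: "\<forall>t\<ge>0. \<forall>x\<in>orthant. exp (l * t) * w x = value_fun w Ms t x"
  shows "l = Lam"
proof -
  have cont: "continuous_on orthant w" by (rule lipschitz_on_continuous_on[OF lip])
  obtain c C where c: "0 < c" and w: "\<And>x. x \<in> orthant \<Longrightarrow> c * csum x \<le> w x \<and> w x \<le> C * csum x"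
    using compare_csum[OF cont hom pos] by blast
  have o0: "(onev::real^'n) \<in> orthant0" unfolding orthant0_def using onev_orth by (auto simp: onev_def vec_eq_iff)
  have eq1: "exp (l * t) * w onev = value_fun w Ms t (onev::real^'n)" if "0 \<le> t" for t
    using eq that onev_orth by blast
  have w1: "0 < w (onev::real^'n)" using pos o0 unfolding pos_on_cone_def by blast
  have upper: "exp ((l - Lam) * t) \<le> C * exp KK / w onev" if t: "0 \<le> t" for t
  proof -
    have "exp (l * t) * w onev \<le> C * B t" using eq1[OF t] V_compare(2)[OF t onev_orth c w] unfolding B_def by simp
    also have "\<dots> \<le> C * exp (Lam * t + KK)"
    proof -
      have "c * csum (onev::real^'n) \<le> C * csum (onev::real^'n)" using w[OF onev_orth] by linarith
      then have "c \<le> C" using csum_onev[where 'n='n] by simp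
      then have C0: "C \<ge> 0" using c by simp
      show ?thesis by (rule mult_left_mono[OF B_bounds(2)[OF t] C0])
    qed
    finally have "exp (l * t) * w onev \<le> C * exp (Lam * t + KK)" .
    then have "exp (l * t) \<le> C * exp (Lam * t + KK) / w onev" using w1 by (simp add: field_simps)
    then have "exp (l * t) * exp (- (Lam * t)) \<le> C * exp (Lam * t + KK) / w onev * exp (- (Lam * t))"
      by (rule mult_right_mono) simp
    moreover have "exp ((l - Lam) * t) = exp (l * t) * exp (- (Lam * t))"
      by (simp add: exp_add[symmetric] algebra_simps)
    moreover have "exp (Lam * t + KK) * exp (- (Lam * t)) = exp KK"
      by (simp add: exp_add[symmetric])
    ultimately show ?thesis by (simp add: mult_ac)
  qed
  have lower: "exp ((Lam - l) * t) \<le> w onev / (c * exp (- KK))" if t: "0 \<le> t" for t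
  proof -
    have "c * exp (Lam * t - KK) \<le> c * B t" using B_bounds(1)[OF t] c by simp
    also have "\<dots> \<le> exp (l * t) * w onev" using eq1[OF t] V_compare(1)[OF t onev_orth c w] unfolding B_def by simp
    finally have "c * exp (Lam * t - KK) \<le> exp (l * t) * w onev" .
    then have "c * exp (Lam * t - KK) * exp (- (l * t)) \<le> exp (l * t) * w onev * exp (- (l * t))"
      by (rule mult_right_mono) simp
    moreover have "c * exp (Lam * t - KK) * exp (- (l * t)) = c * exp (- KK) * exp ((Lam - l) * t)"
      by (simp add: mult.assoc exp_add[symmetric] algebra_simps)
    moreover have "exp (l * t) * w onev * exp (- (l * t)) = w onev"
      by (simp add: mult.commute mult.left_commute exp_minus)
    ultimately have "c * exp (- KK) * exp ((Lam - l) * t) \<le> w onev" by simp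
    then show ?thesis using c by (simp add: field_simps)
  qed
  have "l - Lam \<le> 0" by (rule exp_bounded_imp[OF upper])
  moreover have "Lam - l \<le> 0" by (rule exp_bounded_imp[OF lower])
  ultimately show ?thesis by simp
qed

lemma lambda_M_eq: "lambda_M Ms = Lam"
  unfolding lambda_M_def
proof (rule the_equality)
  show "\<exists>w. homogeneous1 w \<and> pos_on_cone w \<and> (\<exists>L. L-lipschitz_on orthant w) \<and>
       (\<forall>t\<ge>0. \<forall>x\<in>orthant. exp (Lam * t) * w x = value_fun w Ms t x)"
    using vbar_witness by blast
  fix l assume "\<exists>w. homogeneous1 w \<and> pos_on_cone w \<and> (\<exists>L. L-lipschitz_on orthant w) \<and>
       (\<forall>t\<ge>0. \<forall>x\<in>orthant. exp (l * t) * w x = value_fun w Ms t x)"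
  then show "l = Lam" using lambda_unique by blast
qed

lemma VS_two_sided:
  assumes t: "1 \<le> t" and x: "x \<in> orthant"
  shows "dlt * csum x * exp (Lam * (t - 1) - KK) \<le> VS t x" "VS t x \<le> norm x * exp (Lam * t + KK)"
proof -
  have t1: "0 \<le> t - 1" using t by simp
  have "dlt * csum x * exp (Lam * (t - 1) - KK) \<le> dlt * csum x * B (t - 1)"
    using B_bounds(1)[OF t1] dlt(1) csum_nonneg[OF x] by (intro mult_left_mono) auto
  also have "\<dots> \<le> VS (1 + (t - 1)) x" by (rule harnack[OF t1 x])
  finally show "dlt * csum x * exp (Lam * (t - 1) - KK) \<le> VS t x" by simp
  have "VS t x \<le> norm x * B t" using VS_le_B[of t x] t x by simp
  also have "\<dots> \<le> norm x * exp (Lam * t + KK)" using B_bounds(2)[of t] t by (intro mult_left_mono) auto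
  finally show "VS t x \<le> norm x * exp (Lam * t + KK)" .
qed

end

context irr begin

lemma log_bound:
  assumes v0c: "\<And>z. z \<in> orthant \<Longrightarrow> c0 * csum z \<le> v0 z \<and> v0 z \<le> C0 * csum z" and c0: "0 < c0"
    and t: "1 \<le> t" and y: "y \<in> orthant" and a: "0 < a" "a \<le> csum y" and b: "norm y \<le> b"
  shows "\<bar>ln (value_fun v0 Ms t y) / t - Lam\<bar> \<le> (\<bar>ln (c0 * dlt * a) - Lam - KK\<bar> + \<bar>ln (C0 * b) + KK\<bar>) / t"
proof -
  have t0: "0 \<le> t" using t by simp
  have C0: "c0 \<le> C0"
  proof -
    have "c0 * csum (onev::real^'n) \<le> C0 * csum (onev::real^'n)" using v0c[OF onev_orth] by linarith
    then show ?thesis using csum_onev[where 'n='n] by simp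
  qed
  have "0 < csum y" using a by linarith
  also have "csum y \<le> real CARD('n) * norm y" by (rule csum_le_norm)
  finally have "0 < norm y" by (simp add: zero_less_mult_iff)
  then have b0: "0 < b" using b by linarith
  define V where "V = value_fun v0 Ms t y"
  have L1: "c0 * VS t y \<le> V" unfolding V_def by (rule V_compare(1)[OF t0 y c0 v0c])
  have L2: "V \<le> C0 * VS t y" unfolding V_def by (rule V_compare(2)[OF t0 y c0 v0c])
  have lowVS: "dlt * a * exp (Lam * (t - 1) - KK) \<le> VS t y"
  proof -
    have "dlt * a * exp (Lam * (t - 1) - KK) \<le> dlt * csum y * exp (Lam * (t - 1) - KK)"
      using a dlt(1) by (intro mult_right_mono mult_left_mono) auto
    also have "\<dots> \<le> VS t y" by (rule VS_two_sided(1)[OF t y])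
    finally show ?thesis .
  qed
  have upVS: "VS t y \<le> b * exp (Lam * t + KK)"
  proof -
    have "VS t y \<le> norm y * exp (Lam * t + KK)" by (rule VS_two_sided(2)[OF t y])
    also have "\<dots> \<le> b * exp (Lam * t + KK)" using b by (intro mult_right_mono) auto
    finally show ?thesis .
  qed
  have "c0 * (dlt * a * exp (Lam * (t - 1) - KK)) \<le> c0 * VS t y"
    by (rule mult_left_mono[OF lowVS]) (use c0 in simp)
  then have lowV: "c0 * dlt * a * exp (Lam * (t - 1) - KK) \<le> V"
    using L1 by (simp add: mult.assoc)
  have "C0 * VS t y \<le> C0 * (b * exp (Lam * t + KK))"
    by (rule mult_left_mono[OF upVS]) (use C0 c0 in simp)
  then have upV: "V \<le> C0 * b * exp (Lam * t + KK)"
    using L2 by (simp add: mult.assoc)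
  have p1: "0 < c0 * dlt * a * exp (Lam * (t - 1) - KK)" using c0 dlt(1) a by simp
  have Vpos: "0 < V" using p1 lowV by linarith
  have "ln (c0 * dlt * a * exp (Lam * (t - 1) - KK)) \<le> ln V" using p1 Vpos lowV by simp
  moreover have "ln (c0 * dlt * a * exp (Lam * (t - 1) - KK)) = ln (c0 * dlt * a) + (Lam * (t - 1) - KK)"
    using c0 dlt(1) a by (simp add: ln_mult)
  ultimately have k1: "ln (c0 * dlt * a) - Lam - KK \<le> ln V - Lam * t" by (simp add: algebra_simps)
  have p2: "0 < C0 * b" using C0 c0 b0 by simp
  have "ln V \<le> ln (C0 * b * exp (Lam * t + KK))" using p2 Vpos upV by simp
  moreover have "ln (C0 * b * exp (Lam * t + KK)) = ln (C0 * b) + (Lam * t + KK)"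
    using p2 by (subst ln_mult) auto
  ultimately have k2: "ln V - Lam * t \<le> ln (C0 * b) + KK" by simp
  have "\<bar>ln V - Lam * t\<bar> \<le> \<bar>ln (c0 * dlt * a) - Lam - KK\<bar> + \<bar>ln (C0 * b) + KK\<bar>"
    using k1 k2 by linarith
  moreover have "ln V / t - Lam = (ln V - Lam * t) / t" using t by (simp add: field_simps)
  ultimately show ?thesis unfolding V_def[symmetric] using t
    by (simp add: abs_div divide_right_mono)
qed

end

theorem corollary1:
  fixes Ms :: "(real^'n^'n) set" and v0 :: "real^'n \<Rightarrow> real"
  assumes "Ms \<noteq> {}" and "compact Ms" and "convex Ms"
    and "\<forall>m\<in>Ms. metzler m \<and> irreducible_mat m"
    and "continuous_on orthant v0" and "homogeneous1 v0" and "pos_on_cone v0"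
  shows "(\<forall>x\<in>orthant0. ((\<lambda>t. ln (value_fun v0 Ms t x) / t) \<longlongrightarrow> lambda_M Ms) at_top)
       \<and> (\<forall>x\<in>orthant0. \<exists>e>0.
            uniform_limit (ball x e \<inter> orthant0)
              (\<lambda>t y. ln (value_fun v0 Ms t y) / t) (\<lambda>y. lambda_M Ms) at_top)"
proof -
  obtain m0 where m0: "m0 \<in> Ms" using assms(1) by blast
  have "bounded Ms" using assms(2) by (rule compact_imp_bounded)
  then obtain B0 where B0: "\<And>m. m \<in> Ms \<Longrightarrow> norm m \<le> B0" unfolding bounded_iff by blast
  define B1 where "B1 = max B0 0"
  have B1: "\<And>m. m \<in> Ms \<Longrightarrow> norm m \<le> B1" "B1 \<ge> 0" unfolding B1_def using B0 by force+
  define R where "R = B1 + real CARD('n) * real CARD('n) * B1"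
  have R0: "R \<ge> 0" unfolding R_def using B1(2) by simp
  have comp: "\<bar>m $ i $ j\<bar> \<le> B1" if "m \<in> Ms" for m :: "real^'n^'n" and i j
  proof -
    have "\<bar>m $ i $ j\<bar> \<le> norm (m $ i)" by (rule component_le_norm_cart)
    also have "\<dots> \<le> norm m" by (rule Finite_Cartesian_Product.norm_nth_le)
    also have "\<dots> \<le> B1" using B1(1)[OF that] .
    finally show ?thesis .
  qed
  interpret irr Ms R m0
  proof (unfold_locales)
    show "0 \<le> R" by (rule R0)
    fix m :: "real^'n^'n" assume m: "m \<in> Ms"
    show "\<And>x. norm (m *v x) \<le> R * norm x"
    proof -
      fix x :: "real^'n"
      have "norm (m *v x) \<le> onorm ((*v) m) * norm x"
        by (rule onorm[OF matrix_vector_mul_bounded_linear])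
      also have "onorm ((*v) m) \<le> real CARD('n) * real CARD('n) * B1"
        by (rule onorm_le_matrix_component) (rule comp[OF m])
      then have "onorm ((*v) m) * norm x \<le> real CARD('n) * real CARD('n) * B1 * norm x"
        by (rule mult_right_mono) simp
      also have "\<dots> \<le> R * norm x" unfolding R_def using B1(2) by (intro mult_right_mono) auto
      finally show "norm (m *v x) \<le> R * norm x" .
    qed
    show "\<And>i j. \<bar>m $ i $ j\<bar> \<le> R" using comp[OF m] B1(2) unfolding R_def
      by (smt (verit) mult_nonneg_nonneg of_nat_0_le_iff)
    show "metzler m" using assms(4) m by blast
  next
    show "bounded Ms" by fact
    show "m0 \<in> Ms" by (rule m0)
    show "irreducible_mat m0" using assms(4) m0 by blast
  qed
  have lam: "lambda_M Ms = Lam" by (rule lambda_M_eq)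
  obtain c0 C0 where c0: "0 < c0" and v0c: "\<And>z. z \<in> orthant \<Longrightarrow> c0 * csum z \<le> v0 z \<and> v0 z \<le> C0 * csum z"
    using compare_csum[OF assms(5,6,7)] by blast
  have unif: "\<exists>e>0. uniform_limit (ball x e \<inter> orthant0) (\<lambda>t y. ln (value_fun v0 Ms t y) / t) (\<lambda>y. Lam) at_top"
    if x: "x \<in> orthant0" for x
  proof -
    define N where "N = real CARD('n)"
    have N0: "N > 0" unfolding N_def by simp
    define s0 where "s0 = csum x"
    have s0: "s0 > 0" unfolding s0_def by (rule csum_pos[OF x])
    define e where "e = s0 / (2 * N)"
    have e0: "e > 0" unfolding e_def using s0 N0 by simp
    define a where "a = s0 / 2"
    define b where "b = norm x + e"
    have a0: "0 < a" unfolding a_def using s0 by simp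
    have yb: "a \<le> csum y \<and> norm y \<le> b" if y: "y \<in> ball x e \<inter> orthant0" for y
    proof
      have d: "norm (x - y) < e" using y by (simp add: dist_norm)
      have "csum (x - y) \<le> N * norm (x - y)" unfolding N_def by (rule csum_le_norm)
      also have "\<dots> \<le> N * e" using d N0 by (intro mult_left_mono) auto
      also have "N * e = s0 / 2" unfolding e_def using N0 by simp
      finally have "csum x - csum y \<le> s0 / 2" by (simp add: csum_diff)
      then show "a \<le> csum y" unfolding a_def s0_def by simp
      have "norm y \<le> norm x + norm (y - x)" by (metis norm_triangle_sub)
      then show "norm y \<le> b" unfolding b_def using d by (simp add: norm_minus_commute)
    qed
    define M where "M = \<bar>ln (c0 * dlt * a) - Lam - KK\<bar> + \<bar>ln (C0 * b) + KK\<bar>"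
    have M0: "M \<ge> 0" unfolding M_def by simp
    have bnd: "\<bar>ln (value_fun v0 Ms t y) / t - Lam\<bar> \<le> M / t"
      if t: "1 \<le> t" and y: "y \<in> ball x e \<inter> orthant0" for t y
    proof -
      have yo: "y \<in> orthant" using y unfolding orthant0_def by simp
      show ?thesis unfolding M_def using log_bound[OF v0c c0 t yo a0] yb[OF y] by blast
    qed
    have "uniform_limit (ball x e \<inter> orthant0) (\<lambda>t y. ln (value_fun v0 Ms t y) / t) (\<lambda>y. Lam) at_top"
      unfolding uniform_limit_iff
    proof (intro allI impI)
      fix eps :: real assume eps: "0 < eps"
      define T where "T = max 1 (M / eps + 1)"
      have "\<forall>t\<ge>T. \<forall>y\<in>ball x e \<inter> orthant0. dist (ln (value_fun v0 Ms t y) / t) Lam < eps"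
      proof (intro allI impI ballI)
        fix t y assume t: "T \<le> t" and y: "y \<in> ball x e \<inter> orthant0"
        have t1: "1 \<le> t" using t unfolding T_def by simp
        have tM: "M / eps < t" using t unfolding T_def by simp
        then have "M < eps * t" using eps by (simp add: field_simps)
        then have "M / t < eps" using t1 by (simp add: field_simps)
        then show "dist (ln (value_fun v0 Ms t y) / t) Lam < eps"
          using bnd[OF t1 y] by (simp add: dist_real_def)
      qed
      then show "\<forall>\<^sub>F t in at_top. \<forall>y\<in>ball x e \<inter> orthant0. dist (ln (value_fun v0 Ms t y) / t) Lam < eps"
        unfolding eventually_at_top_linorder by blast
    qed
    then show ?thesis using e0 by blast
  qed
  show ?thesis
  proof (intro conjI ballI)
    fix x :: "real^'n" assume x: "x \<in> orthant0"
    obtain e where e: "e > 0" "uniform_limit (ball x e \<inter> orthant0) (\<lambda>t y. ln (value_fun v0 Ms t y) / t) (\<lambda>y. Lam) at_top"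
      using unif[OF x] by blast
    have "x \<in> ball x e \<inter> orthant0" using e x by simp
    from tendsto_uniform_limitI[OF e(2) this]
    show "((\<lambda>t. ln (value_fun v0 Ms t x) / t) \<longlongrightarrow> lambda_M Ms) at_top" unfolding lam .
  next
    fix x :: "real^'n" assume x: "x \<in> orthant0"
    show "\<exists>e>0. uniform_limit (ball x e \<inter> orthant0) (\<lambda>t y. ln (value_fun v0 Ms t y) / t) (\<lambda>y. lambda_M Ms) at_top"
      unfolding lam by (rule unif[OF x])
  qed
qed


end
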